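(* Assume $\bar p=1/2$. There exists a constant $C>0$ such that for every distribution $\eta$ on $\mathcal R$ and every $n\ge1$, $$\Big|\frac{\mathrm{Var}_\eta(F_{n+1})}{n}-\tilde\nu\Big|\le\frac Cn,\qquad\text{where }\tilde\nu=2+4\mu D_{1-p}K\tilde{\mathbf r}=4\mu D_{1-p}K(I-K+2\mathbf p\,\mu D_pK)^{-1}(\mathbf 1-\mathbf p),$$ and $\tilde{\mathbf r}=(I-K+2\mathbf p\,\mu D_pK)^{-1}(\mathbf 1-\mathbf p)-\mathbf 1$.
   Context: Let $\mathcal R=\{1,\dots,N\}$ and let $K$ be a stochastic matrix on $\mathcal R$ whose Markov chain has a unique closed irreducible subset; let $\mu$ (row vector) be its unique stationary distribution. Fix $p:\mathcal R\to(0,1)$, $\mathbf p=(p(1),\dots,p(N))^t$, $\mathbf 1$ the all-ones column vector, $I$ the identity, $D_p$ the diagonal matrix with entries $p(i)$, $D_{1-p}=I-D_p$, $\bar p=\mu\cdot\mathbf p$. Under $P_\eta$, $(R_j)_{j\ge1}$ is a Markov chain with transition matrix $K$ and $R_1\sim\eta$, and given $(R_j)$ the $\xi(j)$ are independent Bernoulli$(p(R_j))$. $F_m=\inf\{k\ge0:\sum_{j=1}^{k+m}\xi(j)=m\}$ is the number of failures before the $m$-th success. (Equivalently $\mathrm{Var}_\eta(F_{n+1})=\mathrm{Var}_\eta(V_1\mid V_0=n)$ for the backward branching-like process.) *)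

theory Defs
  imports "HOL-Analysis.Analysis"
begin

text \<open>State space R = {1..N} is rendered as an arbitrary finite type 'n.
  Matrices are real^'n^'n (K$i$j = K(i,j)), row vectors / column vectors are real^'n.\<close>

definition stochastic_matrix :: "real^'n^'n \<Rightarrow> bool" where
  "stochastic_matrix K \<longleftrightarrow> (\<forall>i j. K$i$j \<ge> 0) \<and> (\<forall>i. (\<Sum>j\<in>UNIV. K$i$j) = 1)"

definition is_distribution :: "('n::finite \<Rightarrow> real) \<Rightarrow> bool" where
  "is_distribution \<eta> \<longleftrightarrow> (\<forall>i. \<eta> i \<ge> 0) \<and> (\<Sum>i\<in>UNIV. \<eta> i) = 1"

definition step_rel :: "real^'n^'n \<Rightarrow> ('n \<times> 'n) set" where
  "step_rel K = {(i,j). K$i$j > 0}"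

definition closed_set :: "real^'n^'n \<Rightarrow> 'n set \<Rightarrow> bool" where
  "closed_set K C \<longleftrightarrow> C \<noteq> {} \<and> (\<forall>i\<in>C. \<forall>j. K$i$j > 0 \<longrightarrow> j \<in> C)"

definition irreducible_set :: "real^'n^'n \<Rightarrow> 'n set \<Rightarrow> bool" where
  "irreducible_set K C \<longleftrightarrow> (\<forall>i\<in>C. \<forall>j\<in>C. (i,j) \<in> (step_rel K)\<^sup>*)"

definition unique_closed_irreducible :: "real^'n^'n \<Rightarrow> bool" where
  "unique_closed_irreducible K \<longleftrightarrow> (\<exists>!C. closed_set K C \<and> irreducible_set K C)"

definition stationary :: "real^'n^'n \<Rightarrow> real^'n \<Rightarrow> bool" where
  "stationary K \<mu> \<longleftrightarrow> (\<forall>i. \<mu>$i \<ge> 0) \<and> (\<Sum>i\<in>UNIV. \<mu>$i) = 1 \<and> \<mu> v* K = \<mu>"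

definition bern :: "('n \<Rightarrow> real) \<Rightarrow> 'n \<Rightarrow> bool \<Rightarrow> real" where
  "bern p r x = (if x then p r else 1 - p r)"

text \<open>Probability weight of a finite trajectory ((R_1,xi(1)),...,(R_L,xi(L))) excluding the
  initial law: product of Bernoulli weights and transition probabilities.\<close>
fun path_w :: "real^'n^'n \<Rightarrow> ('n \<Rightarrow> real) \<Rightarrow> ('n \<times> bool) list \<Rightarrow> real" where
  "path_w K p [] = 1"
| "path_w K p [(r,x)] = bern p r x"
| "path_w K p ((r,x) # (s,y) # rest) = bern p r x * K$r$s * path_w K p ((s,y) # rest)"

definition traj_prob :: "('n \<Rightarrow> real) \<Rightarrow> real^'n^'n \<Rightarrow> ('n \<Rightarrow> real) \<Rightarrow> ('n \<times> bool) list \<Rightarrow> real" where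
  "traj_prob \<eta> K p xs = (case xs of [] \<Rightarrow> 1 | (r,x) # _ \<Rightarrow> \<eta> r * path_w K p xs)"

text \<open>P_eta(F_m = k) for m \<ge> 1: the first k+m trials contain exactly m successes and
  trial k+m is a success.\<close>
definition F_prob :: "('n::finite \<Rightarrow> real) \<Rightarrow> real^'n^'n \<Rightarrow> ('n \<Rightarrow> real) \<Rightarrow> nat \<Rightarrow> nat \<Rightarrow> real" where
  "F_prob \<eta> K p m k = (\<Sum>xs\<in>{xs :: ('n \<times> bool) list. length xs = k + m
        \<and> length (filter snd xs) = m \<and> snd (last xs)}. traj_prob \<eta> K p xs)"

definition F_mean :: "('n::finite \<Rightarrow> real) \<Rightarrow> real^'n^'n \<Rightarrow> ('n \<Rightarrow> real) \<Rightarrow> nat \<Rightarrow> real" where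
  "F_mean \<eta> K p m = (\<Sum>k. real k * F_prob \<eta> K p m k)"

definition F_var :: "('n::finite \<Rightarrow> real) \<Rightarrow> real^'n^'n \<Rightarrow> ('n \<Rightarrow> real) \<Rightarrow> nat \<Rightarrow> real" where
  "F_var \<eta> K p m = (\<Sum>k. (real k - F_mean \<eta> K p m)^2 * F_prob \<eta> K p m k)"

definition diag_mat :: "('n \<Rightarrow> real) \<Rightarrow> real^'n^'n" where
  "diag_mat f = (\<chi> i j. if i = j then f i else 0)"

definition outer :: "real^'n \<Rightarrow> real^'n \<Rightarrow> real^'n^'n" where
  "outer u v = (\<chi> i j. u$i * v$j)"

definition nu_tilde :: "real^'n^'n \<Rightarrow> ('n \<Rightarrow> real) \<Rightarrow> real^'n \<Rightarrow> real" where
  "nu_tilde K p \<mu> =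
     (let pv = (\<chi> i. p i);
          A = mat 1 - K + 2 *\<^sub>R (outer pv \<mu> ** diag_mat p ** K)
      in 4 * ((\<mu> v* (diag_mat (\<lambda>i. 1 - p i) ** K ** matrix_inv A)) \<bullet> (vec 1 - pv)))"

end

theory Submission
  imports Defs
begin


lemma ex_min_fin: fixes f :: "'n::finite \<Rightarrow> real" shows "\<exists>r0. \<forall>s. f r0 \<le> f s"
proof -
  have "Min (range f) \<in> range f" by (rule Min_in) auto
  then obtain r0 where "f r0 = Min (range f)" by (metis rangeE)
  have "\<forall>s. f r0 \<le> f s"
  proof
    fix s show "f r0 \<le> f s" unfolding \<open>f r0 = Min (range f)\<close> by (rule Min_le) auto
  qed
  then show ?thesis by blast
qed

lemma ex_max_fin: fixes f :: "'n::finite \<Rightarrow> real" shows "\<exists>r0. \<forall>s. f s \<le> f r0"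
proof -
  have "Max (range f) \<in> range f" by (rule Max_in) auto
  then obtain r0 where "f r0 = Max (range f)" by (metis rangeE)
  have "\<forall>s. f s \<le> f r0"
  proof
    fix s show "f s \<le> f r0" unfolding \<open>f r0 = Max (range f)\<close> by (rule Max_ge) auto
  qed
  then show ?thesis by blast
qed

locale mc =
  fixes K :: "real^'n::finite^'n" and p :: "'n \<Rightarrow> real" and \<mu> :: "real^'n"
  assumes stoch: "stochastic_matrix K" and uci: "unique_closed_irreducible K"
    and stat: "stationary K \<mu>" and pb: "\<forall>i. 0 < p i \<and> p i < 1"
    and half: "(\<Sum>i\<in>UNIV. \<mu>$i * p i) = 1/2"
begin

lemma Knn: "0 \<le> K$i$j" using stoch unfolding stochastic_matrix_def by auto
lemma Krow: "(\<Sum>j\<in>UNIV. K$i$j) = 1" using stoch unfolding stochastic_matrix_def by auto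
lemma p0: "0 < p i" using pb by auto
lemma p1: "p i < 1" using pb by auto

lemma reach: "\<exists>s0. \<forall>r. (r, s0) \<in> (step_rel K)\<^sup>+"
proof -
  define Rc where "Rc t = {u. (t,u) \<in> (step_rel K)\<^sup>*}" for t
  obtain C where C: "closed_set K C" "irreducible_set K C"
    and Cu: "\<forall>C'. closed_set K C' \<and> irreducible_set K C' \<longrightarrow> C' = C"
    using uci unfolding unique_closed_irreducible_def by blast
  have toC: "\<exists>t\<in>C. (r,t) \<in> (step_rel K)\<^sup>*" for r
  proof -
    obtain t where t: "(r,t) \<in> (step_rel K)\<^sup>*"
      and tmin: "\<forall>t'. (r,t') \<in> (step_rel K)\<^sup>* \<longrightarrow> card (Rc t) \<le> card (Rc t')"
      using ex_has_least_nat[of "\<lambda>t. (r,t) \<in> (step_rel K)\<^sup>*" r "\<lambda>t. card (Rc t)"] by auto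
    have cl: "closed_set K (Rc t)" unfolding closed_set_def
    proof (intro conjI ballI allI impI)
      show "Rc t \<noteq> {}" unfolding Rc_def by auto
      fix i j assume i: "i \<in> Rc t" and ij: "0 < K$i$j"
      have "(t,i) \<in> (step_rel K)\<^sup>*" using i unfolding Rc_def by simp
      moreover have "(i,j) \<in> step_rel K" using ij unfolding step_rel_def by simp
      ultimately have "(t,j) \<in> (step_rel K)\<^sup>*" by (rule rtrancl_into_rtrancl)
      then show "j \<in> Rc t" unfolding Rc_def by simp
    qed
    have irr: "irreducible_set K (Rc t)"
      unfolding irreducible_set_def
    proof (intro ballI)
      fix u v assume u: "u \<in> Rc t" and v: "v \<in> Rc t"
      have tu: "(t,u) \<in> (step_rel K)\<^sup>*" using u unfolding Rc_def by simp
      have sub: "Rc u \<subseteq> Rc t" unfolding Rc_def using rtrancl_trans[OF tu] by blast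
      have "(r,u) \<in> (step_rel K)\<^sup>*" using rtrancl_trans[OF t tu] .
      then have "card (Rc t) \<le> card (Rc u)" using tmin by auto
      moreover have "card (Rc u) \<le> card (Rc t)" using sub by (intro card_mono) simp_all
      ultimately have "card (Rc u) = card (Rc t)" by linarith
      then have "Rc u = Rc t" using card_subset_eq[OF _ sub] by simp
      then show "(u,v) \<in> (step_rel K)\<^sup>*" using v unfolding Rc_def by auto
    qed
    have "Rc t = C" using Cu cl irr by blast
    moreover have "t \<in> Rc t" unfolding Rc_def by auto
    ultimately show ?thesis using t by auto
  qed
  obtain s0 where s0: "s0 \<in> C" using C(1) unfolding closed_set_def by auto
  obtain j where j: "K$s0$j > 0"
  proof -
    have "\<exists>j. K$s0$j > 0"
    proof (rule ccontr)
      assume "\<not> ?thesis"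
      then have k0: "K$s0$j \<le> 0" for j by (simp add: not_less)
      have "K$s0$j = 0" for j using Knn[of s0 j] k0[of j] by linarith
      then show False using Krow[of s0] by simp
    qed
    then show ?thesis using that by blast
  qed
  have "j \<in> C" using C(1) s0 j unfolding closed_set_def by auto
  hence "(j,s0) \<in> (step_rel K)\<^sup>*" using C(2) s0 unfolding irreducible_set_def by auto
  moreover have "(s0,j) \<in> step_rel K" using j by (simp add: step_rel_def)
  ultimately have s0s0: "(s0,s0) \<in> (step_rel K)\<^sup>+" by (intro rtrancl_into_trancl2)
  have "(r,s0) \<in> (step_rel K)\<^sup>+" for r
  proof -
    obtain t where tC: "t \<in> C" and rt: "(r,t) \<in> (step_rel K)\<^sup>*" using toC by blast
    have ts: "(t,s0) \<in> (step_rel K)\<^sup>*" using C(2) s0 tC unfolding irreducible_set_def by auto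
    have "(r,s0) \<in> (step_rel K)\<^sup>*" using rt ts by (rule rtrancl_trans)
    then show ?thesis using s0s0 by (rule rtrancl_trancl_trancl)
  qed
  then show ?thesis by blast
qed

definition Am where "Am = diag_mat (\<lambda>i. 1 - p i) ** K"
definition Bm where "Bm = diag_mat p ** K"

lemma sum_delta_mult: "(\<Sum>k\<in>(UNIV::'n set). (if r = k then c else 0) * b k) = c * (b r::real)"
proof -
  have "(\<Sum>k\<in>(UNIV::'n set). (if r = k then c else 0) * b k) = (\<Sum>k\<in>UNIV. if r = k then c * b k else 0)"
    by (rule sum.cong) auto
  also have "\<dots> = c * b r" by (subst sum.delta') auto
  finally show ?thesis .
qed

lemma diag_e: "(diag_mat f ** (M::real^'n^'n))$r$s = f r * M$r$s"
  unfolding diag_mat_def matrix_matrix_mult_def by (simp only: vec_lambda_beta sum_delta_mult)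
lemma Am_e: "Am$r$s = (1 - p r) * K$r$s" unfolding Am_def by (rule diag_e)
lemma Bm_e: "Bm$r$s = p r * K$r$s" unfolding Bm_def by (rule diag_e)

lemma Am_v: "(Am *v v)$r = (1 - p r) * (\<Sum>s\<in>UNIV. K$r$s * v$s)"
  by (simp add: matrix_vector_mult_def Am_e sum_distrib_left mult.assoc)
lemma Bm_v: "(Bm *v v)$r = p r * (\<Sum>s\<in>UNIV. K$r$s * v$s)"
  by (simp add: matrix_vector_mult_def Bm_e sum_distrib_left mult.assoc)

lemma AB: "Am + Bm = K"
  by (simp add: vec_eq_iff Am_e Bm_e algebra_simps)

lemma K_v: "(K *v v)$r = (\<Sum>s\<in>UNIV. K$r$s * v$s)"
  by (simp add: matrix_vector_mult_def)

lemma IA_v: "((mat 1 - Am) *v v)$r = v$r - (1 - p r) * (\<Sum>s\<in>UNIV. K$r$s * v$s)"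
  by (simp add: matrix_vector_mult_diff_rdistrib Am_v)

lemma Kavg_ge: assumes "\<forall>s. c \<le> v$s" shows "c \<le> (\<Sum>s\<in>UNIV. K$r$s * v$s)"
proof -
  have "(\<Sum>s\<in>UNIV. K$r$s * c) \<le> (\<Sum>s\<in>UNIV. K$r$s * v$s)"
    using assms Knn by (intro sum_mono mult_left_mono) auto
  moreover have "(\<Sum>s\<in>UNIV. K$r$s * c) = (\<Sum>s\<in>UNIV. K$r$s) * c" by (rule sum_distrib_right[symmetric])
  ultimately show ?thesis by (simp add: Krow)
qed

lemma Kavg_le: assumes "\<forall>s. v$s \<le> c" shows "(\<Sum>s\<in>UNIV. K$r$s * v$s) \<le> c"
proof -
  have "(\<Sum>s\<in>UNIV. K$r$s * v$s) \<le> (\<Sum>s\<in>UNIV. K$r$s * c)"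
    using assms Knn by (intro sum_mono mult_left_mono) auto
  moreover have "(\<Sum>s\<in>UNIV. K$r$s * c) = (\<Sum>s\<in>UNIV. K$r$s) * c" by (rule sum_distrib_right[symmetric])
  ultimately show ?thesis by (simp add: Krow)
qed

lemma maxp: assumes "\<forall>r. 0 \<le> ((mat 1 - Am) *v v)$r" shows "0 \<le> v$r"
proof -
  obtain r0 where r0: "\<forall>s. v$r0 \<le> v$s" using ex_min_fin[of "\<lambda>s. v$s"] by auto
  define S where "S = (\<Sum>s\<in>UNIV. K$r0$s * v$s)"
  have "v$r0 \<le> S" unfolding S_def by (rule Kavg_ge[OF r0])
  then have a: "(1 - p r0) * v$r0 \<le> (1 - p r0) * S"
    using p1[of r0] by (intro mult_left_mono) auto
  have b: "0 \<le> v$r0 - (1 - p r0) * S" using assms[rule_format, of r0] unfolding IA_v S_def .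
  have c: "p r0 * v$r0 = v$r0 - (1 - p r0) * v$r0" by (simp add: algebra_simps)
  have "0 \<le> p r0 * v$r0" using a b c by linarith
  then have "0 \<le> v$r0" using p0[of r0] by (simp add: zero_le_mult_iff)
  moreover have "v$r0 \<le> v$r" using r0 by blast
  ultimately show ?thesis by linarith
qed

lemma IA_inj: assumes "(mat 1 - Am) *v v = 0" shows "v = 0"
proof -
  have h: "v$r - (1 - p r) * (\<Sum>s\<in>UNIV. K$r$s * v$s) = 0" for r
    using IA_v[of v r] assms by simp
  have "0 \<le> v$r" for r using maxp[of v] assms by simp
  moreover have "0 \<le> (-v)$r" for r
  proof (rule maxp, rule allI)
    fix r
    have "((mat 1 - Am) *v (-v))$r = - (v$r - (1 - p r) * (\<Sum>s\<in>UNIV. K$r$s * v$s))"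
      unfolding IA_v by (simp add: sum_negf)
    then show "0 \<le> ((mat 1 - Am) *v (-v))$r" using h[of r] by simp
  qed
  ultimately have "v$r = 0" for r using antisym[of "v$r" 0] by simp
  then show ?thesis by (simp add: vec_eq_iff)
qed

end


context mc begin

definition IA where "IA = mat 1 - Am"
definition R where "R = matrix_inv IA"
definition Q where "Q = R ** Bm"
definition pv where "pv = (\<chi> r. p r)"

lemma IA_invertible: "invertible IA"
  unfolding IA_def invertible_left_inverse matrix_left_invertible_ker using IA_inj by blast

lemma R_props: "IA ** R = mat 1" "R ** IA = mat 1"
proof -
  have "\<exists>A'. IA ** A' = mat 1 \<and> A' ** IA = mat 1" using IA_invertible unfolding invertible_def .
  then have "IA ** R = mat 1 \<and> R ** IA = mat 1" unfolding R_def matrix_inv_def by (rule someI_ex)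
  then show "IA ** R = mat 1" "R ** IA = mat 1" by auto
qed

lemma IA_cancel: assumes "IA *v u = IA *v w" shows "u = w"
proof -
  have "(mat 1 - Am) *v (u - w) = 0" using assms unfolding IA_def by (simp add: matrix_vector_mult_diff_distrib)
  then have "u - w = 0" using IA_inj by blast
  then show ?thesis by simp
qed

lemma IA_v': "(IA *v v)$r = v$r - (1 - p r) * (\<Sum>s\<in>UNIV. K$r$s * v$s)"
  unfolding IA_def by (rule IA_v)

lemma IA_Q: "IA ** Q = Bm" by (simp add: Q_def matrix_mul_assoc R_props)

lemma IA_one: "IA *v 1 = pv"
  by (simp add: vec_eq_iff IA_v' pv_def Krow)

lemma Bm_one: "Bm *v 1 = pv"
  by (simp add: vec_eq_iff Bm_v pv_def Krow)

lemma Q_one: "Q *v 1 = 1"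
proof (rule IA_cancel)
  show "IA *v (Q *v 1) = IA *v 1"
    by (simp add: matrix_vector_mul_assoc IA_Q Bm_one IA_one)
qed

lemma Qv: "(Q *v f)$r = (\<Sum>s\<in>UNIV. Q$r$s * f$s)" by (simp add: matrix_vector_mult_def)

lemma Q_row: "(\<Sum>s\<in>UNIV. Q$r$s) = 1"
  using Q_one unfolding vec_eq_iff by (simp add: Qv)

definition ev :: "'n \<Rightarrow> real^'n" where "ev s = (\<chi> t. if t = s then 1 else 0)"
lemma ev_col: "(M *v ev s)$t = M$t$s" for M :: "real^'n^'n"
  unfolding ev_def matrix_vector_mult_def by (simp add: if_distrib[of "\<lambda>x. _ * x"] cong: if_cong)

lemma IA_mat: "(IA ** M)$r$s = M$r$s - (1 - p r) * (\<Sum>t\<in>UNIV. K$r$t * M$t$s)" for M :: "real^'n^'n"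
proof -
  have "(IA ** M)$r$s = (IA *v (M *v ev s))$r" by (simp add: matrix_vector_mul_assoc ev_col)
  also have "\<dots> = M$r$s - (1 - p r) * (\<Sum>t\<in>UNIV. K$r$t * M$t$s)" by (simp add: IA_v' ev_col)
  finally show ?thesis .
qed

lemma Q_nn: "0 \<le> Q$r$s"
proof -
  have "\<forall>t. 0 \<le> ((mat 1 - Am) *v (Q *v ev s))$t"
    using IA_Q by (simp add: IA_def[symmetric] matrix_vector_mul_assoc ev_col Bm_e Knn p0 less_imp_le)
  then have "0 \<le> (Q *v ev s)$r" by (rule maxp)
  then show ?thesis by (simp add: ev_col)
qed

lemma Q_fix: "Q$r$s = (1 - p r) * (\<Sum>t\<in>UNIV. K$r$t * Q$t$s) + p r * K$r$s"
proof -
  have "(IA ** Q)$r$s = Bm$r$s" using IA_Q by simp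
  then show ?thesis by (simp add: Bm_e IA_mat)
qed

end


context mc begin

lemma Q_pos: assumes "(r,s) \<in> (step_rel K)\<^sup>+" shows "0 < Q$r$s"
  using assms
proof (induction rule: converse_trancl_induct)
  case (base y)
  then have "0 < K$y$s" by (simp add: step_rel_def)
  then have "0 < p y * K$y$s" using p0[of y] by simp
  moreover have "0 \<le> (1 - p y) * (\<Sum>t\<in>UNIV. K$y$t * Q$t$s)"
    using p1[of y] by (intro mult_nonneg_nonneg sum_nonneg) (auto simp: Knn Q_nn less_imp_le)
  ultimately show ?case by (subst Q_fix) linarith
next
  case (step y z)
  then have Kyz: "0 < K$y$z" by (simp add: step_rel_def)
  have "K$y$z * Q$z$s \<le> (\<Sum>t\<in>UNIV. K$y$t * Q$t$s)"
    by (rule member_le_sum) (auto simp: Knn Q_nn)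
  moreover have "0 < K$y$z * Q$z$s" using Kyz step.IH by simp
  ultimately have "0 < (\<Sum>t\<in>UNIV. K$y$t * Q$t$s)" by linarith
  then have "0 < (1 - p y) * (\<Sum>t\<in>UNIV. K$y$t * Q$t$s)" using p1[of y] by simp
  moreover have "0 \<le> p y * K$y$s" using p0[of y] Knn[of y s] by simp
  ultimately show ?case by (subst Q_fix) linarith
qed

definition s0 where "s0 = (SOME s0. \<forall>r. (r,s0) \<in> (step_rel K)\<^sup>+)"
lemma s0: "(r, s0) \<in> (step_rel K)\<^sup>+"
  using someI_ex[OF reach] unfolding s0_def by blast

definition dl where "dl = Min (range (\<lambda>r. Q$r$s0))"
lemma dl_le: "dl \<le> Q$r$s0" unfolding dl_def by (rule Min_le) auto
lemma dl_pos: "0 < dl"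
proof -
  have "dl \<in> range (\<lambda>r. Q$r$s0)" unfolding dl_def by (rule Min_in) auto
  then obtain r where "dl = Q$r$s0" by auto
  then show ?thesis using Q_pos[OF s0] by simp
qed
lemma dl_le1: "dl \<le> 1"
proof -
  obtain r :: 'n where True by simp
  have "Q$r$s0 \<le> (\<Sum>s\<in>UNIV. Q$r$s)" by (rule member_le_sum) (auto simp: Q_nn)
  then show ?thesis using dl_le[of r] Q_row[of r] by simp
qed

lemma Q_split: "(Q *v f)$r = dl * f$s0 + (\<Sum>s\<in>UNIV. (Q$r$s - (if s0 = s then dl else 0)) * f$s)"
  by (simp add: Qv left_diff_distrib sum_subtractf sum_delta_mult)
lemma c_nn: "0 \<le> Q$r$s - (if s0 = s then dl else 0)" using dl_le Q_nn by auto
lemma c_sum: "(\<Sum>s\<in>UNIV. (Q$r$s - (if s0 = s then dl else 0))) = 1 - dl"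
  by (simp add: sum_subtractf Q_row)

lemma Q_upper: assumes "\<forall>s. f$s \<le> U" shows "(Q *v f)$r \<le> dl * f$s0 + (1 - dl) * U"
proof -
  have "(\<Sum>s\<in>UNIV. (Q$r$s - (if s0 = s then dl else 0)) * f$s) \<le> (\<Sum>s\<in>UNIV. (Q$r$s - (if s0 = s then dl else 0)) * U)"
    using assms c_nn by (intro sum_mono mult_left_mono) auto
  also have "\<dots> = (1 - dl) * U" by (simp add: sum_distrib_right[symmetric] c_sum)
  finally show ?thesis by (simp add: Q_split)
qed

lemma Q_lower: assumes "\<forall>s. L \<le> f$s" shows "dl * f$s0 + (1 - dl) * L \<le> (Q *v f)$r"
proof -
  have "(\<Sum>s\<in>UNIV. (Q$r$s - (if s0 = s then dl else 0)) * L) \<le> (\<Sum>s\<in>UNIV. (Q$r$s - (if s0 = s then dl else 0)) * f$s)"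
    using assms c_nn by (intro sum_mono mult_left_mono) auto
  moreover have "(\<Sum>s\<in>UNIV. (Q$r$s - (if s0 = s then dl else 0)) * L) = (1 - dl) * L" by (simp add: sum_distrib_right[symmetric] c_sum)
  ultimately show ?thesis by (simp add: Q_split)
qed

primrec qp :: "nat \<Rightarrow> real^'n \<Rightarrow> real^'n" where
  "qp 0 f = f" | "qp (Suc i) f = Q *v qp i f"

lemma osc: assumes "\<forall>r r'. \<bar>f$r - f$r'\<bar> \<le> D" shows "\<bar>qp i f $ r - qp i f $ r'\<bar> \<le> (1 - dl)^i * D"
proof (induction i arbitrary: r r')
  case 0 then show ?case using assms by simp
next
  case (Suc i)
  define g where "g = qp i f"
  obtain r1 where r1: "\<forall>s. g$s \<le> g$r1" using ex_max_fin[of "\<lambda>s. g$s"] by auto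
  obtain r2 where r2: "\<forall>s. g$r2 \<le> g$s" using ex_min_fin[of "\<lambda>s. g$s"] by auto
  have d: "g$r1 - g$r2 \<le> (1-dl)^i * D" using Suc.IH[of r1 r2] unfolding g_def by simp
  have u: "(Q *v g)$t \<le> dl * g$s0 + (1 - dl) * g$r1" for t using Q_upper r1 by blast
  have l: "dl * g$s0 + (1 - dl) * g$r2 \<le> (Q *v g)$t" for t using Q_lower r2 by blast
  have "(1 - dl) * (g$r1 - g$r2) \<le> (1 - dl) * ((1-dl)^i * D)"
    using d dl_le1 by (intro mult_left_mono) auto
  then have "(Q *v g)$t - (Q *v g)$t' \<le> (1 - dl)^(Suc i) * D" for t t'
    using u[of t] l[of t'] by (simp add: algebra_simps)
  then show ?case unfolding g_def by (simp add: abs_le_iff)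
qed

end


context mc begin

definition piv where "piv = 2 *\<^sub>R (\<mu> v* Bm)"

lemma muK: "\<mu> v* K = \<mu>" using stat unfolding stationary_def by auto
lemma mu_nn: "0 \<le> \<mu>$i" using stat unfolding stationary_def by auto
lemma mu_sum: "(\<Sum>i\<in>UNIV. \<mu>$i) = 1" using stat unfolding stationary_def by auto
lemma mu_p: "\<mu> \<bullet> pv = 1/2" using half by (simp add: inner_vec_def pv_def)
lemma mu_one: "\<mu> \<bullet> 1 = 1" using mu_sum by (simp add: inner_vec_def)

lemma muB: "\<mu> v* Bm = \<mu> v* IA"
proof -
  have "Bm = K - Am" using AB by (simp add: algebra_simps)
  then show ?thesis unfolding IA_def by (simp add: vector_matrix_mult_diff_distrib vector_matrix_mult_diff_rdistrib muK)
qed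

lemma piQ: "piv v* Q = piv"
proof -
  have "(\<mu> v* Bm) v* Q = \<mu> v* (IA ** (R ** Bm))" by (simp add: muB Q_def vector_matrix_mul_assoc)
  also have "IA ** (R ** Bm) = Bm" by (simp add: matrix_mul_assoc R_props)
  finally show ?thesis unfolding piv_def by (simp add: scaleR_vector_matrix_assoc)
qed

lemma pi_dot_Q: "piv \<bullet> (Q *v g) = piv \<bullet> g"
  by (simp add: dot_lmul_matrix[symmetric] piQ)

lemma pi_qp: "piv \<bullet> qp i g = piv \<bullet> g"
  by (induction i) (simp_all add: pi_dot_Q)

lemma pi_nn: "0 \<le> piv$s"
  unfolding piv_def by (simp add: vector_matrix_mult_def Bm_e mu_nn Knn p0 less_imp_le sum_nonneg)

lemma pi_dot: "piv \<bullet> g = 2 * (\<mu> \<bullet> (Bm *v g))"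
  unfolding piv_def by (simp add: dot_lmul_matrix)

lemma pi_sum: "(\<Sum>s\<in>UNIV. piv$s) = 1"
proof -
  have "(\<Sum>s\<in>UNIV. piv$s) = piv \<bullet> 1" by (simp add: inner_vec_def)
  also have "\<dots> = 1" by (simp add: pi_dot Bm_one mu_p)
  finally show ?thesis .
qed

definition prob :: "real^'n \<Rightarrow> bool" where "prob w \<longleftrightarrow> (\<forall>r. 0 \<le> w$r) \<and> (\<Sum>r\<in>UNIV. w$r) = 1"

lemma prob_pi: "prob piv" unfolding prob_def using pi_nn pi_sum by auto

lemma prob_le: assumes "prob w" "\<forall>s. g$s \<le> U" shows "w \<bullet> g \<le> U"
proof -
  have "w \<bullet> g = (\<Sum>s\<in>UNIV. w$s * g$s)" by (simp add: inner_vec_def)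
  also have "\<dots> \<le> (\<Sum>s\<in>UNIV. w$s * U)" using assms unfolding prob_def by (intro sum_mono mult_left_mono) auto
  also have "\<dots> = (\<Sum>s\<in>UNIV. w$s) * U" by (rule sum_distrib_right[symmetric])
  finally show ?thesis using assms unfolding prob_def by simp
qed

lemma prob_ge: assumes "prob w" "\<forall>s. L \<le> g$s" shows "L \<le> w \<bullet> g"
proof -
  have "(\<Sum>s\<in>UNIV. w$s * L) \<le> (\<Sum>s\<in>UNIV. w$s * g$s)" using assms unfolding prob_def by (intro sum_mono mult_left_mono) auto
  moreover have "(\<Sum>s\<in>UNIV. w$s * L) = (\<Sum>s\<in>UNIV. w$s) * L" by (rule sum_distrib_right[symmetric])
  moreover have "w \<bullet> g = (\<Sum>s\<in>UNIV. w$s * g$s)" by (simp add: inner_vec_def)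
  ultimately show ?thesis using assms unfolding prob_def by simp
qed

lemma prob_abs: assumes "prob w" "\<forall>s. \<bar>g$s\<bar> \<le> B" shows "\<bar>w \<bullet> g\<bar> \<le> B"
proof -
  have a0: "g$s \<le> B \<and> -B \<le> g$s" for s using assms(2)[rule_format, of s] by (auto simp: abs_le_iff)
  then have a: "\<forall>s. g$s \<le> B" "\<forall>s. -B \<le> g$s" by auto
  show ?thesis using prob_le[OF assms(1) a(1)] prob_ge[OF assms(1) a(2)] by (simp add: abs_le_iff)
qed

lemma conv: assumes "prob w" "prob w'" "\<forall>r r'. \<bar>f$r - f$r'\<bar> \<le> D"
  shows "\<bar>w \<bullet> qp i f - w' \<bullet> qp i f\<bar> \<le> (1 - dl)^i * D"
proof -
  define g where "g = qp i f"
  obtain r1 where r1: "\<forall>s. g$s \<le> g$r1" using ex_max_fin[of "\<lambda>s. g$s"] by auto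
  obtain r2 where r2: "\<forall>s. g$r2 \<le> g$s" using ex_min_fin[of "\<lambda>s. g$s"] by auto
  have d: "g$r1 - g$r2 \<le> (1-dl)^i * D" using osc[OF assms(3), of i r1 r2] unfolding g_def by simp
  have "w \<bullet> g \<le> g$r1" "w' \<bullet> g \<le> g$r1" using prob_le assms r1 by blast+
  moreover have "g$r2 \<le> w \<bullet> g" "g$r2 \<le> w' \<bullet> g" using prob_ge assms r2 by blast+
  ultimately show ?thesis using d unfolding g_def by (simp add: abs_le_iff)
qed

lemma conv_pi: assumes "prob w" "\<forall>r r'. \<bar>f$r - f$r'\<bar> \<le> D"
  shows "\<bar>w \<bullet> qp i f - piv \<bullet> f\<bar> \<le> (1 - dl)^i * D"
  using conv[OF assms(1) prob_pi assms(2), of i] by (simp add: pi_qp)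

lemma prob_ev: "prob (ev r)" unfolding prob_def ev_def by simp
lemma ev_dot: "ev r \<bullet> g = g$r"
proof -
  have "ev r \<bullet> g = (\<Sum>i\<in>UNIV. if r = i then g$i else 0)" unfolding ev_def inner_vec_def
    by (rule sum.cong) auto
  then show ?thesis by (subst (asm) sum.delta') auto
qed

lemma Q_avg_le: assumes "\<forall>s. g$s \<le> U" shows "(Q *v g)$r \<le> U"
proof -
  have "(Q *v g)$r \<le> dl * g$s0 + (1 - dl) * U" using Q_upper assms by blast
  moreover have "dl * g$s0 \<le> dl * U" using assms dl_pos by (intro mult_left_mono) auto
  ultimately show ?thesis by (simp add: algebra_simps)
qed
lemma Q_avg_ge: assumes "\<forall>s. L \<le> g$s" shows "L \<le> (Q *v g)$r"
proof -
  have "dl * g$s0 + (1 - dl) * L \<le> (Q *v g)$r" using Q_lower assms by blast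
  moreover have "dl * L \<le> dl * g$s0" using assms dl_pos by (intro mult_left_mono) auto
  ultimately show ?thesis by (simp add: algebra_simps)
qed

lemma qp_bound: assumes "\<forall>s. \<bar>f$s\<bar> \<le> B" shows "\<bar>qp i f $ r\<bar> \<le> B"
proof (induction i arbitrary: r)
  case 0 then show ?case using assms by simp
next
  case (Suc i)
  have a0: "qp i f $ s \<le> B \<and> -B \<le> qp i f $ s" for s using Suc.IH[of s] by (auto simp: abs_le_iff)
  then have a: "\<forall>s. qp i f $ s \<le> B" "\<forall>s. -B \<le> qp i f $ s" by auto
  have "(Q *v qp i f)$r \<le> B" by (rule Q_avg_le[OF a(1)])
  moreover have "-B \<le> (Q *v qp i f)$r" by (rule Q_avg_ge[OF a(2)])
  ultimately show ?case by (simp add: abs_le_iff)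
qed

definition mnorm :: "real^'n^'n \<Rightarrow> real" where "mnorm M = (\<Sum>r\<in>UNIV. \<Sum>s\<in>UNIV. \<bar>M$r$s\<bar>)"

lemma mnorm_bound: assumes "\<forall>s. \<bar>v$s\<bar> \<le> B" shows "\<bar>(M *v v)$r\<bar> \<le> mnorm M * B"
proof -
  obtain s :: 'n where True by simp
  have B0: "0 \<le> B" using assms by (meson abs_ge_zero order_trans)
  have "\<bar>(M *v v)$r\<bar> = \<bar>\<Sum>s\<in>UNIV. M$r$s * v$s\<bar>" by (simp add: matrix_vector_mult_def)
  also have "\<dots> \<le> (\<Sum>s\<in>UNIV. \<bar>M$r$s * v$s\<bar>)" by (rule sum_abs)
  also have "\<dots> \<le> (\<Sum>s\<in>UNIV. \<bar>M$r$s\<bar> * B)" using assms by (intro sum_mono) (simp add: abs_mult mult_left_mono)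
  also have "\<dots> = (\<Sum>s\<in>UNIV. \<bar>M$r$s\<bar>) * B" by (rule sum_distrib_right[symmetric])
  also have "\<dots> \<le> mnorm M * B" unfolding mnorm_def
    by (intro mult_right_mono B0 member_le_sum[of r UNIV "\<lambda>r. \<Sum>s\<in>UNIV. \<bar>M$r$s\<bar>"]) (auto intro: sum_nonneg)
  finally show ?thesis .
qed

end


context mc begin

definition Amat where "Amat = mat 1 - K + 2 *\<^sub>R (outer pv \<mu> ** diag_mat p ** K)"

lemma outer_v: "(outer u w ** M) *v v = (w \<bullet> (M *v v)) *\<^sub>R u" for M :: "real^'n^'n"
proof -
  have "(outer u w ** M) *v v = outer u w *v (M *v v)" by (simp add: matrix_vector_mul_assoc)
  also have "\<dots> = (w \<bullet> (M *v v)) *\<^sub>R u"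
    by (simp add: vec_eq_iff outer_def matrix_vector_mult_def inner_vec_def sum_distrib_left mult.assoc mult.commute mult.left_commute)
  finally show ?thesis .
qed

lemma scaleR_mv: "(c *\<^sub>R M) *v v = c *\<^sub>R (M *v v)" for M :: "real^'n^'n"
  by (simp add: vec_eq_iff matrix_vector_mult_def sum_distrib_left mult.assoc)

lemma Amat_v: "Amat *v x = x - K *v x + (2 * (\<mu> \<bullet> (Bm *v x))) *\<^sub>R pv"
proof -
  have "outer pv \<mu> ** diag_mat p ** K = outer pv \<mu> ** Bm" by (simp add: Bm_def matrix_mul_assoc)
  then show ?thesis unfolding Amat_def
    by (simp add: matrix_vector_mult_diff_rdistrib matrix_vector_mult_add_rdistrib outer_v
        scaleR_mv)
qed

lemma muKx: "\<mu> \<bullet> (K *v x) = \<mu> \<bullet> x" by (simp add: dot_lmul_matrix[symmetric] muK)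

lemma mu_Amat: "\<mu> \<bullet> (Amat *v x) = \<mu> \<bullet> (Bm *v x)"
  by (simp add: Amat_v inner_diff_right inner_add_right muKx mu_p)

lemma harm_max: assumes h: "K *v x = x" and r1: "\<forall>s. x$s \<le> x$r1" shows "x$s0 = x$r1"
proof -
  have stepz: "x$z = x$r1" if y: "x$y = x$r1" and yz: "(y,z) \<in> step_rel K" for y z
  proof -
    have "(\<Sum>t\<in>UNIV. K$y$t * (x$r1 - x$t)) = x$r1 * (\<Sum>t\<in>UNIV. K$y$t) - (K *v x)$y"
      by (simp add: right_diff_distrib sum_subtractf sum_distrib_left matrix_vector_mult_def mult.commute)
    also have "\<dots> = 0" using h y by (simp add: Krow)
    finally have "(\<Sum>t\<in>UNIV. K$y$t * (x$r1 - x$t)) = 0" .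
    moreover have "\<forall>t\<in>UNIV. 0 \<le> K$y$t * (x$r1 - x$t)" using r1 Knn by simp
    ultimately have "\<forall>t\<in>UNIV. K$y$t * (x$r1 - x$t) = 0"
      using sum_nonneg_eq_0_iff[of UNIV "\<lambda>t. K$y$t * (x$r1 - x$t)"] by simp
    then have "K$y$z * (x$r1 - x$z) = 0" by simp
    moreover have "0 < K$y$z" using yz by (simp add: step_rel_def)
    ultimately show ?thesis by simp
  qed
  have "(r1, s0) \<in> (step_rel K)\<^sup>*" using s0 by (rule trancl_into_rtrancl)
  then show ?thesis
  proof (induction rule: rtrancl_induct)
    case base then show ?case by simp
  next
    case (step y z) then show ?case using stepz by blast
  qed
qed

lemma harmonic: assumes h: "K *v x = x" shows "x$r = x$s0"
proof -
  obtain r1 where r1: "\<forall>s. x$s \<le> x$r1" using ex_max_fin[of "\<lambda>s. x$s"] by auto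
  obtain r2 where r2: "\<forall>s. x$r2 \<le> x$s" using ex_min_fin[of "\<lambda>s. x$s"] by auto
  have a: "x$s0 = x$r1" using harm_max[OF h r1] .
  have h2: "K *v (-x) = -x" using h by (simp add: vec_eq_iff matrix_vector_mult_def sum_negf)
  have "\<forall>s. (-x)$s \<le> (-x)$r2" using r2 by simp
  then have b: "(-x)$s0 = (-x)$r2" using harm_max[OF h2] by blast
  show ?thesis using a b r1[rule_format, of r] r2[rule_format, of r] by simp
qed

lemma Amat_inj: assumes "Amat *v x = 0" shows "x = 0"
proof -
  have c: "\<mu> \<bullet> (Bm *v x) = 0" using mu_Amat[of x] assms by simp
  then have "x - K *v x = 0" using assms by (simp add: Amat_v)
  then have kx: "K *v x = x" by simp
  have xc: "x = (x$s0) *\<^sub>R 1" unfolding vec_eq_iff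
  proof
    fix i show "x$i = ((x$s0) *\<^sub>R 1)$i" using harmonic[OF kx, of i] by simp
  qed
  have "\<mu> \<bullet> (Bm *v ((x$s0) *\<^sub>R 1)) = x$s0 / 2"
    by (simp add: matrix_vector_mult_scaleR Bm_one mu_p)
  then have "x$s0 = 0" using c xc by simp
  then show ?thesis using xc by simp
qed

lemma Amat_invertible: "invertible Amat"
  unfolding invertible_left_inverse matrix_left_invertible_ker using Amat_inj by blast

lemma Amat_inv: "Amat ** matrix_inv Amat = mat 1"
proof -
  have "\<exists>A'. Amat ** A' = mat 1 \<and> A' ** Amat = mat 1" using Amat_invertible unfolding invertible_def .
  then have "Amat ** matrix_inv Amat = mat 1 \<and> matrix_inv Amat ** Amat = mat 1" unfolding matrix_inv_def by (rule someI_ex)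
  then show ?thesis by auto
qed

definition xst where "xst = matrix_inv Amat *v (1 - pv)"

lemma Amat_xs: "Amat *v xst = 1 - pv"
  by (simp add: xst_def matrix_vector_mul_assoc Amat_inv)

lemma c_xs: "\<mu> \<bullet> (Bm *v xst) = 1/2"
proof -
  have "\<mu> \<bullet> (Bm *v xst) = \<mu> \<bullet> (1 - pv)" using mu_Amat[of xst] Amat_xs by simp
  then show ?thesis by (simp add: inner_diff_right mu_one mu_p)
qed

lemma poisson: "xst - K *v xst = 1 - 2 *\<^sub>R pv"
proof -
  have "xst - K *v xst + pv = 1 - pv" using Amat_xs by (simp add: Amat_v c_xs)
  then show ?thesis by (simp add: algebra_simps scaleR_2)
qed

lemma nu_eq: "nu_tilde K p \<mu> = 4 * (\<mu> \<bullet> (Am *v xst))"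
proof -
  have pv': "(\<chi> i. p i) = pv" by (simp add: pv_def)
  have A': "mat 1 - K + 2 *\<^sub>R (outer pv \<mu> ** diag_mat p ** K) = Amat" by (simp add: Amat_def)
  show ?thesis unfolding nu_tilde_def Let_def pv' A'
    by (simp add: dot_lmul_matrix Am_def[symmetric] matrix_vector_mul_assoc[symmetric] xst_def)
qed

end


context mc begin

fun W :: "nat \<Rightarrow> nat \<Rightarrow> real^'n" where
  "W 0 k = 0"
| "W (Suc m) 0 = Bm *v W m 0 + (if m = 0 then pv else 0)"
| "W (Suc m) (Suc k) = Am *v W (Suc m) k + Bm *v W m (Suc k)"

definition Sset :: "nat \<Rightarrow> nat \<Rightarrow> ('n \<times> bool) list set" where
  "Sset m k = {xs. length xs = k + m \<and> length (filter snd xs) = m \<and> snd (last xs)}"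

definition Wc where "Wc m k r = (\<Sum>xs\<in>{xs\<in>Sset m k. fst (hd xs) = r}. path_w K p xs)"

lemma finite_len: "finite {xs :: ('n \<times> bool) list. length xs = n}"
  using finite_lists_length_eq[of "UNIV :: ('n\<times>bool) set" n] by simp

lemma Sset_finite: "finite (Sset m k)"
  by (rule finite_subset[OF _ finite_len[of "k+m"]]) (auto simp: Sset_def)

lemma group_head: assumes "finite T"
  shows "(\<Sum>ys\<in>T. K$r$(fst (hd ys)) * path_w K p ys)
       = (\<Sum>s\<in>UNIV. K$r$s * (\<Sum>ys\<in>{ys\<in>T. fst (hd ys) = s}. path_w K p ys))"
proof -
  have "(\<Sum>s\<in>UNIV. K$r$s * (\<Sum>ys\<in>{ys\<in>T. fst (hd ys) = s}. path_w K p ys))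
      = (\<Sum>s\<in>UNIV. (\<Sum>ys\<in>{ys\<in>T. fst (hd ys) = s}. K$r$(fst (hd ys)) * path_w K p ys))"
    by (simp add: sum_distrib_left)
  also have "\<dots> = (\<Sum>ys\<in>T. K$r$(fst (hd ys)) * path_w K p ys)"
    by (rule sum.group) (use assms in auto)
  finally show ?thesis by simp
qed

lemma path_cons: assumes "ys \<noteq> []"
  shows "path_w K p ((r,b)#ys) = bern p r b * K$r$(fst (hd ys)) * path_w K p ys"
proof -
  obtain s y rest where "ys = (s,y)#rest" using assms by (metis list.exhaust surj_pair)
  then show ?thesis by simp
qed

lemma Sset_dec: "{xs \<in> Sset (Suc m) k. fst (hd xs) = r} =
   Cons (r,False) ` {ys. 0 < k \<and> ys \<in> Sset (Suc m) (k-1)}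
 \<union> Cons (r,True) ` {ys. if m = 0 then ys = [] \<and> k = 0 else ys \<in> Sset m k}" (is "?L = ?A \<union> ?B")
proof
  show "?L \<subseteq> ?A \<union> ?B"
  proof
    fix xs assume xs: "xs \<in> ?L"
    then have len: "length xs = k + Suc m" and cnt: "length (filter snd xs) = Suc m"
      and lst: "snd (last xs)" and hd: "fst (hd xs) = r" by (auto simp: Sset_def)
    then obtain b ys where xs_eq: "xs = (r,b)#ys" by (cases xs) auto
    show "xs \<in> ?A \<union> ?B"
    proof (cases b)
      case False
      then have c: "length (filter snd ys) = Suc m" using cnt xs_eq by simp
      have l: "length ys = k + m" using len xs_eq by simp
      have "Suc m \<le> length ys" using c length_filter_le[of snd ys] by simp
      then have k0: "0 < k" using l by simp
      have ne: "ys \<noteq> []" using c by auto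
      then have "snd (last ys)" using lst xs_eq by simp
      then have "ys \<in> Sset (Suc m) (k-1)" using c l k0 by (simp add: Sset_def)
      then show ?thesis using xs_eq False k0 by auto
    next
      case True
      then have c: "length (filter snd ys) = m" using cnt xs_eq by simp
      have l: "length ys = k + m" using len xs_eq by simp
      show ?thesis
      proof (cases "m = 0")
        case True
        have "ys = []"
        proof (rule ccontr)
          assume ne: "ys \<noteq> []"
          then have "snd (last ys)" using lst xs_eq by simp
          moreover have "last ys \<in> set ys" using ne by simp
          ultimately have "filter snd ys \<noteq> []" by (auto simp: filter_empty_conv)
          then show False using c True by simp
        qed
        then show ?thesis using xs_eq \<open>b\<close> True l by auto
      next
        case False
        then have ne: "ys \<noteq> []" using l by auto
        then have "snd (last ys)" using lst xs_eq by simp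
        then have "ys \<in> Sset m k" using c l by (simp add: Sset_def)
        then show ?thesis using xs_eq \<open>b\<close> False by auto
      qed
    qed
  qed
next
  show "?A \<union> ?B \<subseteq> ?L"
  proof
    fix xs assume "xs \<in> ?A \<union> ?B"
    then show "xs \<in> ?L"
    proof
      assume "xs \<in> ?A"
      then obtain ys where xs: "xs = (r,False)#ys" and k0: "0 < k" and ys: "ys \<in> Sset (Suc m) (k-1)" by auto
      then have "ys \<noteq> []" by (auto simp: Sset_def)
      then show ?thesis using xs k0 ys by (auto simp: Sset_def)
    next
      assume "xs \<in> ?B"
      then obtain ys where xs: "xs = (r,True)#ys" and ys: "if m = 0 then ys = [] \<and> k = 0 else ys \<in> Sset m k" by auto
      show ?thesis
      proof (cases "m = 0")
        case True then show ?thesis using xs ys by (auto simp: Sset_def)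
      next
        case False
        then have ys': "ys \<in> Sset m k" using ys by simp
        then have "ys \<noteq> []" using False by (auto simp: Sset_def)
        then show ?thesis using xs ys' by (auto simp: Sset_def)
      qed
    qed
  qed
qed

lemma Sset_ne: "(xs :: ('n \<times> bool) list) \<in> Sset (Suc m) k \<Longrightarrow> xs \<noteq> []" by (auto simp: Sset_def)

lemma Wc_rec: "Wc (Suc m) k r =
   (if k = 0 then 0 else (1 - p r) * (\<Sum>s\<in>UNIV. K$r$s * Wc (Suc m) (k-1) s))
 + (if m = 0 then (if k = 0 then p r else 0) else p r * (\<Sum>s\<in>UNIV. K$r$s * Wc m k s))"
proof -
  define A where "A = {ys. 0 < k \<and> ys \<in> Sset (Suc m) (k-1)}"
  define B where "B = {ys. if m = 0 then ys = [] \<and> k = 0 else ys \<in> Sset m k}"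
  have fA: "finite A" unfolding A_def by (rule finite_subset[OF _ Sset_finite[of "Suc m" "k-1"]]) auto
  have fB: "finite B"
  proof (cases "m = 0")
    case True then show ?thesis unfolding B_def by simp
  next
    case False then show ?thesis unfolding B_def by (simp add: Sset_finite)
  qed
  have disj: "Cons (r,False) ` A \<inter> Cons (r,True) ` B = {}" by auto
  have "Wc (Suc m) k r = (\<Sum>xs\<in>Cons (r,False) ` A \<union> Cons (r,True) ` B. path_w K p xs)"
    unfolding Wc_def Sset_dec A_def B_def ..
  also have "\<dots> = (\<Sum>xs\<in>Cons (r,False) ` A. path_w K p xs) + (\<Sum>xs\<in>Cons (r,True) ` B. path_w K p xs)"
    by (rule sum.union_disjoint) (use fA fB disj in auto)
  also have "(\<Sum>xs\<in>Cons (r,False) ` A. path_w K p xs) = (\<Sum>ys\<in>A. path_w K p ((r,False)#ys))"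
    by (subst sum.reindex) (auto simp: inj_on_def)
  also have "\<dots> = (\<Sum>ys\<in>A. (1 - p r) * (K$r$(fst (hd ys)) * path_w K p ys))"
  proof (rule sum.cong[OF refl])
    fix ys assume "ys \<in> A"
    then have "ys \<noteq> []" using Sset_ne unfolding A_def by blast
    then show "path_w K p ((r,False)#ys) = (1 - p r) * (K$r$(fst (hd ys)) * path_w K p ys)"
      by (simp add: path_cons bern_def)
  qed
  also have "\<dots> = (1 - p r) * (\<Sum>ys\<in>A. K$r$(fst (hd ys)) * path_w K p ys)"
    by (simp add: sum_distrib_left)
  also have "\<dots> = (if k = 0 then 0 else (1 - p r) * (\<Sum>s\<in>UNIV. K$r$s * Wc (Suc m) (k-1) s))"
  proof (cases "k = 0")
    case True then show ?thesis by (simp add: A_def)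
  next
    case False
    then have "A = Sset (Suc m) (k-1)" by (simp add: A_def)
    then show ?thesis using False by (simp add: group_head Sset_finite Wc_def)
  qed
  also have "(\<Sum>xs\<in>Cons (r,True) ` B. path_w K p xs) = (\<Sum>ys\<in>B. path_w K p ((r,True)#ys))"
    by (subst sum.reindex) (auto simp: inj_on_def)
  also have "\<dots> = (if m = 0 then (if k = 0 then p r else 0) else p r * (\<Sum>s\<in>UNIV. K$r$s * Wc m k s))"
  proof (cases "m = 0")
    case True
    then show ?thesis by (cases "k = 0") (simp_all add: B_def bern_def)
  next
    case False
    then have Bm': "B = Sset m k" by (simp add: B_def)
    have "(\<Sum>ys\<in>B. path_w K p ((r,True)#ys)) = (\<Sum>ys\<in>B. p r * (K$r$(fst (hd ys)) * path_w K p ys))"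
    proof (rule sum.cong[OF refl])
      fix ys assume "ys \<in> B"
      then have "ys \<noteq> []" using False unfolding Bm' by (auto simp: Sset_def)
      then show "path_w K p ((r,True)#ys) = p r * (K$r$(fst (hd ys)) * path_w K p ys)"
        by (simp add: path_cons bern_def)
    qed
    also have "\<dots> = p r * (\<Sum>ys\<in>B. K$r$(fst (hd ys)) * path_w K p ys)" by (simp add: sum_distrib_left)
    finally have "(\<Sum>ys\<in>B. path_w K p ((r,True)#ys)) = p r * (\<Sum>ys\<in>B. K$r$(fst (hd ys)) * path_w K p ys)" .
    then show ?thesis using False by (simp add: Bm' group_head Sset_finite Wc_def)
  qed
  finally show ?thesis .
qed

lemma W_eq: "Wc (Suc m) k r = W (Suc m) k $ r"
proof (induction m arbitrary: k r)
  case 0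
  show ?case
  proof (induction k arbitrary: r)
    case 0 show ?case by (subst Wc_rec) (simp add: pv_def)
  next
    case (Suc k) show ?case by (subst Wc_rec) (simp add: Am_v Suc.IH)
  qed
next
  case (Suc m)
  note IHm = Suc.IH
  show ?case
  proof (induction k arbitrary: r)
    case 0 show ?case by (subst Wc_rec) (simp add: Bm_v IHm)
  next
    case (Suc k) show ?case by (subst Wc_rec) (simp add: Am_v Bm_v IHm Suc.IH)
  qed
qed

lemma traj: "zs \<noteq> [] \<Longrightarrow> traj_prob \<eta> K p zs = \<eta> (fst (hd zs)) * path_w K p zs"
  by (cases zs) (auto simp: traj_prob_def split: prod.split)

lemma F_prob_W: "F_prob \<eta> K p (Suc m) k = (\<Sum>r\<in>UNIV. \<eta> r * W (Suc m) k $ r)"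
proof -
  have "F_prob \<eta> K p (Suc m) k = (\<Sum>zs\<in>Sset (Suc m) k. traj_prob \<eta> K p zs)"
    unfolding F_prob_def Sset_def ..
  also have "\<dots> = (\<Sum>zs\<in>Sset (Suc m) k. \<eta> (fst (hd zs)) * path_w K p zs)"
    by (rule sum.cong[OF refl]) (simp add: traj Sset_ne)
  also have "\<dots> = (\<Sum>r\<in>UNIV. \<Sum>zs\<in>{zs\<in>Sset (Suc m) k. fst (hd zs) = r}. \<eta> (fst (hd zs)) * path_w K p zs)"
    by (rule sum.group[symmetric]) (auto simp: Sset_finite)
  also have "\<dots> = (\<Sum>r\<in>UNIV. \<eta> r * Wc (Suc m) k r)"
    unfolding Wc_def by (rule sum.cong[OF refl]) (simp add: sum_distrib_left)
  finally show ?thesis by (simp add: W_eq)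
qed

end


lemma diffs_pow_ge: "real (Suc n) ^ d \<le> ((diffs ^^ d) (\<lambda>_. 1::real)) n"
proof (induction d arbitrary: n)
  case 0 then show ?case by simp
next
  case (Suc d)
  have "real (Suc n) ^ Suc d = real (Suc n) * real (Suc n) ^ d" by simp
  also have "\<dots> \<le> real (Suc n) * real (Suc (Suc n)) ^ d"
    by (intro mult_left_mono power_mono) auto
  also have "\<dots> \<le> real (Suc n) * ((diffs ^^ d) (\<lambda>_. 1::real)) (Suc n)"
    by (intro mult_left_mono Suc.IH) auto
  also have "\<dots> = ((diffs ^^ Suc d) (\<lambda>_. 1::real)) n" by (simp add: diffs_def)
  finally show ?case .
qed

lemma diffs_pow_summable: "norm (x::real) < 1 \<Longrightarrow> summable (\<lambda>n. ((diffs ^^ d) (\<lambda>_. 1::real)) n * x ^ n)"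
proof (induction d arbitrary: x)
  case 0 then show ?case by (simp add: summable_geometric)
next
  case (Suc d)
  show ?case using termdiff_converges[of x 1 "(diffs ^^ d) (\<lambda>_. 1::real)"] Suc by simp
qed

lemma poly_geom_summable: assumes "0 \<le> \<rho>" "\<rho> < (1::real)" shows "summable (\<lambda>n. real (Suc n) ^ d * \<rho> ^ n)"
proof (rule summable_comparison_test'[OF diffs_pow_summable[of \<rho> d]])
  show "norm \<rho> < 1" using assms by simp
  fix n :: nat
  show "norm (real (Suc n) ^ d * \<rho> ^ n) \<le> ((diffs ^^ d) (\<lambda>_. 1::real)) n * \<rho> ^ n"
    using assms diffs_pow_ge[of n d] by (simp add: mult_right_mono)
qed

context mc begin

definition rho where "rho = Max (range (\<lambda>r. 1 - p r))"
lemma rho_ge: "1 - p r \<le> rho" unfolding rho_def by (rule Max_ge) auto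
lemma rho_lt: "rho < 1"
proof -
  have "rho \<in> range (\<lambda>r. 1 - p r)" unfolding rho_def by (rule Max_in) auto
  then show ?thesis using p0 by auto
qed
lemma rho_pos: "0 < rho" using rho_ge[of undefined] p1[of undefined] by simp

lemma Am_bound: assumes "\<forall>s. 0 \<le> v$s" "\<forall>s. v$s \<le> B" shows "0 \<le> (Am *v v)$r" "(Am *v v)$r \<le> rho * B"
proof -
  have S0: "0 \<le> (\<Sum>s\<in>UNIV. K$r$s * v$s)" using assms Knn by (intro sum_nonneg) simp
  have S1: "(\<Sum>s\<in>UNIV. K$r$s * v$s) \<le> B" using Kavg_le assms(2) by blast
  show "0 \<le> (Am *v v)$r" unfolding Am_v using S0 p1[of r] by simp
  have "(1 - p r) * (\<Sum>s\<in>UNIV. K$r$s * v$s) \<le> rho * (\<Sum>s\<in>UNIV. K$r$s * v$s)"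
    using rho_ge S0 by (intro mult_right_mono) auto
  also have "\<dots> \<le> rho * B" using S1 rho_pos by (intro mult_left_mono) auto
  finally show "(Am *v v)$r \<le> rho * B" unfolding Am_v .
qed

lemma Bm_bound: assumes "\<forall>s. 0 \<le> v$s" "\<forall>s. v$s \<le> B" shows "0 \<le> (Bm *v v)$r" "(Bm *v v)$r \<le> B"
proof -
  have S0: "0 \<le> (\<Sum>s\<in>UNIV. K$r$s * v$s)" using assms Knn by (intro sum_nonneg) simp
  have S1: "(\<Sum>s\<in>UNIV. K$r$s * v$s) \<le> B" using Kavg_le assms(2) by blast
  show "0 \<le> (Bm *v v)$r" unfolding Bm_v using S0 p0[of r] by simp
  have "p r * (\<Sum>s\<in>UNIV. K$r$s * v$s) \<le> 1 * (\<Sum>s\<in>UNIV. K$r$s * v$s)"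
    using p1[of r] S0 by (intro mult_right_mono) auto
  then show "(Bm *v v)$r \<le> B" unfolding Bm_v using S1 by simp
qed

lemma W_bound: "0 \<le> W (Suc m) k $ r \<and> W (Suc m) k $ r \<le> real (Suc k) ^ m * rho ^ k"
proof (induction m arbitrary: k r)
  case 0
  show ?case
  proof (induction k arbitrary: r)
    case 0 show ?case using p0[of r] p1[of r] by (simp add: pv_def less_imp_le)
  next
    case (Suc k)
    have a: "\<forall>s. 0 \<le> W (Suc 0) k $ s" "\<forall>s. W (Suc 0) k $ s \<le> rho ^ k" using Suc.IH by auto
    show ?case using Am_bound[OF a, of r] by (simp add: mult.commute)
  qed
next
  case (Suc m)
  note IHm = Suc.IH
  show ?case
  proof (induction k arbitrary: r)
    case 0
    have a: "\<forall>s. 0 \<le> W (Suc m) 0 $ s" "\<forall>s. W (Suc m) 0 $ s \<le> 1" using IHm[of 0] by auto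
    show ?case using Bm_bound[OF a, of r] by simp
  next
    case (Suc k)
    have a: "\<forall>s. 0 \<le> W (Suc (Suc m)) k $ s" "\<forall>s. W (Suc (Suc m)) k $ s \<le> real (Suc k) ^ Suc m * rho ^ k"
      using Suc.IH by auto
    have b: "\<forall>s. 0 \<le> W (Suc m) (Suc k) $ s" "\<forall>s. W (Suc m) (Suc k) $ s \<le> real (Suc (Suc k)) ^ m * rho ^ Suc k"
      using IHm[of "Suc k"] by (auto simp del: W.simps)
    have x1: "0 \<le> (Am *v W (Suc (Suc m)) k)$r" "(Am *v W (Suc (Suc m)) k)$r \<le> rho * (real (Suc k) ^ Suc m * rho ^ k)"
      using Am_bound[OF a] by auto
    have x2: "0 \<le> (Bm *v W (Suc m) (Suc k))$r" "(Bm *v W (Suc m) (Suc k))$r \<le> real (Suc (Suc k)) ^ m * rho ^ Suc k"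
      using Bm_bound[OF b] by auto
    have pw: "real (Suc k) ^ Suc m + real (Suc (Suc k)) ^ m \<le> real (Suc (Suc k)) ^ Suc m"
    proof -
      have "real (Suc k) ^ m \<le> real (Suc (Suc k)) ^ m" by (intro power_mono) auto
      then have "real (Suc k) * real (Suc k) ^ m \<le> real (Suc k) * real (Suc (Suc k)) ^ m"
        by (intro mult_left_mono) auto
      then show ?thesis by (simp add: algebra_simps)
    qed
    have "rho ^ Suc k * (real (Suc k) ^ Suc m + real (Suc (Suc k)) ^ m) \<le> rho ^ Suc k * real (Suc (Suc k)) ^ Suc m"
      using pw rho_pos by (intro mult_left_mono) auto
    then show ?case using x1 x2 by (simp add: algebra_simps)
  qed
qed

lemma W_nn: "0 \<le> W m k $ r"
  by (cases m) (simp_all add: W_bound)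

lemma W_summable: "summable (\<lambda>k. real (Suc k) ^ j * W m k $ r)"
proof (cases m)
  case 0 then show ?thesis by simp
next
  case (Suc m')
  show ?thesis
  proof (rule summable_comparison_test'[OF poly_geom_summable[of rho "j + m'"]])
    show "0 \<le> rho" "rho < 1" using rho_pos rho_lt by auto
    fix k
    have "real (Suc k) ^ j * W m k $ r \<le> real (Suc k) ^ j * (real (Suc k) ^ m' * rho ^ k)"
      using W_bound[of m' k r] Suc by (intro mult_left_mono) auto
    then show "norm (real (Suc k) ^ j * W m k $ r) \<le> real (Suc k) ^ (j + m') * rho ^ k"
      using W_nn[of m k r] by (simp add: power_add mult.assoc)
  qed
qed

lemma W_summable0: "summable (\<lambda>k. real k ^ j * W m k $ r)"
proof (rule summable_comparison_test'[OF W_summable[of j m r]])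
  fix k
  show "norm (real k ^ j * W m k $ r) \<le> real (Suc k) ^ j * W m k $ r"
    using W_nn[of m k r] by (simp add: mult_right_mono power_mono)
qed

end


context mc begin

definition mom :: "nat \<Rightarrow> nat \<Rightarrow> real^'n" where "mom j m = (\<chi> r. \<Sum>k. real k ^ j * W m k $ r)"
definition smom :: "nat \<Rightarrow> nat \<Rightarrow> real^'n" where "smom j m = (\<chi> r. \<Sum>k. real (Suc k) ^ j * W m k $ r)"

lemma mv_suminf: fixes M :: "real^'n^'n" and f :: "nat \<Rightarrow> 'n \<Rightarrow> real" assumes "\<And>s. summable (\<lambda>k. f k s)"
  shows "(M *v (\<chi> s. \<Sum>k. f k s))$r = (\<Sum>k. (\<Sum>s\<in>UNIV. M$r$s * f k s))"
proof -
  have "(M *v (\<chi> s. \<Sum>k. f k s))$r = (\<Sum>s\<in>UNIV. M$r$s * (\<Sum>k. f k s))" by (simp add: matrix_vector_mult_def)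
  also have "\<dots> = (\<Sum>s\<in>UNIV. \<Sum>k. M$r$s * f k s)" 
  proof (rule sum.cong[OF refl])
    fix s show "M$r$s * (\<Sum>k. f k s) = (\<Sum>k. M$r$s * f k s)" using suminf_mult[OF assms[of s]] by simp
  qed
  also have "\<dots> = (\<Sum>k. \<Sum>s\<in>UNIV. M$r$s * f k s)"
    using suminf_sum[of UNIV "\<lambda>s k. M$r$s * f k s"] summable_mult[OF assms] by simp
  finally show ?thesis .
qed

lemma mom_split: "mom j (Suc m) $ r = (if j = 0 then W (Suc m) 0 $ r else 0) + (Am *v smom j (Suc m))$r
   + (Bm *v mom j m)$r - (if j = 0 then (Bm *v W m 0)$r else 0)"
proof -
  define f where "f k = real k ^ j * W (Suc m) k $ r" for k
  define g where "g k s = real k ^ j * W m k $ s" for k s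
  define h where "h k s = real (Suc k) ^ j * W (Suc m) k $ s" for k s
  have sf: "summable f" unfolding f_def by (rule W_summable0)
  have sg: "summable (\<lambda>k. g k s)" for s unfolding g_def by (rule W_summable0)
  have sg': "summable (\<lambda>k. g (Suc k) s)" for s using sg[of s] by (subst summable_Suc_iff)
  have sh: "summable (\<lambda>k. h k s)" for s unfolding h_def by (rule W_summable)
  have fS: "f (Suc k) = (\<Sum>s\<in>UNIV. Am$r$s * h k s) + (\<Sum>s\<in>UNIV. Bm$r$s * g (Suc k) s)" for k
    unfolding f_def g_def h_def
    by (simp add: matrix_vector_mult_def distrib_left sum_distrib_left mult.assoc mult.left_commute)
  have A: "(\<Sum>k. \<Sum>s\<in>UNIV. Am$r$s * h k s) = (Am *v smom j (Suc m))$r"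
    unfolding smom_def using mv_suminf[of h Am r, OF sh] by (simp add: h_def)
  have g0: "(\<Sum>k. g (Suc k) s) = mom j m $ s - (if j = 0 then W m 0 $ s else 0)" for s
    using suminf_split_head[OF sg[of s]] by (simp add: mom_def g_def)
  have B: "(\<Sum>k. \<Sum>s\<in>UNIV. Bm$r$s * g (Suc k) s) = (Bm *v mom j m)$r - (if j = 0 then (Bm *v W m 0)$r else 0)"
  proof -
    have "(\<Sum>k. \<Sum>s\<in>UNIV. Bm$r$s * g (Suc k) s) = (Bm *v (\<chi> s. \<Sum>k. g (Suc k) s))$r"
      using mv_suminf[of "\<lambda>k s. g (Suc k) s" Bm r, OF sg'] by simp
    also have "(\<chi> s. \<Sum>k. g (Suc k) s) = mom j m - (if j = 0 then W m 0 else 0)"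
      by (simp add: vec_eq_iff g0)
    finally show ?thesis by (simp add: matrix_vector_mult_diff_distrib)
  qed
  have sA: "summable (\<lambda>k. \<Sum>s\<in>UNIV. Am$r$s * h k s)" by (intro summable_sum summable_mult sh)
  have sB: "summable (\<lambda>k. \<Sum>s\<in>UNIV. Bm$r$s * g (Suc k) s)" by (intro summable_sum summable_mult sg')
  have "mom j (Suc m) $ r = suminf f" by (simp add: mom_def f_def[abs_def])
  also have "\<dots> = f 0 + (\<Sum>k. f (Suc k))" using suminf_split_head[OF sf] by simp
  also have "(\<Sum>k. f (Suc k)) = (\<Sum>k. \<Sum>s\<in>UNIV. Am$r$s * h k s) + (\<Sum>k. \<Sum>s\<in>UNIV. Bm$r$s * g (Suc k) s)"
    unfolding fS by (rule suminf_add[OF sA sB, symmetric])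
  also have "f 0 = (if j = 0 then W (Suc m) 0 $ r else 0)" by (simp add: f_def)
  finally show ?thesis using A B by simp
qed

lemma smom0: "smom 0 m = mom 0 m" by (simp add: smom_def mom_def)
lemma smom1: "smom 1 m = mom 1 m + mom 0 m"
proof -
  have "(\<Sum>k. real (Suc k) * W m k $ r) = (\<Sum>k. real k * W m k $ r) + (\<Sum>k. W m k $ r)" for r
  proof -
    have "(\<Sum>k. real k * W m k $ r + W m k $ r) = (\<Sum>k. real k * W m k $ r) + (\<Sum>k. W m k $ r)"
      using W_summable0[of 1 m r] W_summable0[of 0 m r] by (intro suminf_add[symmetric]) simp_all
    then show ?thesis by (simp add: algebra_simps)
  qed
  then show ?thesis by (simp add: smom_def mom_def vec_eq_iff)
qed
lemma smom2: "smom 2 m = mom 2 m + 2 *\<^sub>R mom 1 m + mom 0 m"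
proof -
  have "(\<Sum>k. real (Suc k)^2 * W m k $ r) = (\<Sum>k. real k ^ 2 * W m k $ r) + 2 * (\<Sum>k. real k * W m k $ r) + (\<Sum>k. W m k $ r)" for r
  proof -
    have s1: "summable (\<lambda>k. real k ^ 2 * W m k $ r)" using W_summable0[of 2 m r] by simp
    have s2: "summable (\<lambda>k. 2 * (real k * W m k $ r))" using W_summable0[of 1 m r] by (simp add: summable_mult)
    have s3: "summable (\<lambda>k. W m k $ r)" using W_summable0[of 0 m r] by simp
    have "(\<Sum>k. real k ^ 2 * W m k $ r + 2 * (real k * W m k $ r) + W m k $ r)
       = (\<Sum>k. real k ^ 2 * W m k $ r) + (\<Sum>k. 2 * (real k * W m k $ r)) + (\<Sum>k. W m k $ r)"
      using s1 s2 s3 by (simp add: suminf_add[symmetric] summable_add)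
    also have "(\<Sum>k. 2 * (real k * W m k $ r)) = 2 * (\<Sum>k. real k * W m k $ r)"
      using W_summable0[of 1 m r] by (simp add: suminf_mult)
    finally show ?thesis by (simp add: algebra_simps power2_eq_square)
  qed
  then show ?thesis by (simp add: smom_def mom_def vec_eq_iff)
qed

end


context mc begin

lemma mom_0: "mom j 0 = 0" by (simp add: mom_def vec_eq_iff)

lemma IA_expand: "IA *v v = v - Am *v v" unfolding IA_def by (simp add: matrix_vector_mult_diff_rdistrib)

lemma T_eq: "mom 0 (Suc m) = Am *v mom 0 (Suc m) + Bm *v mom 0 m + (if m = 0 then pv else 0)"
  unfolding vec_eq_iff
proof
  fix r show "mom 0 (Suc m) $ r = (Am *v mom 0 (Suc m) + Bm *v mom 0 m + (if m = 0 then pv else 0)) $ r"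
    by (subst mom_split) (simp add: smom0)
qed

lemma Am_one: "Am *v 1 = 1 - pv" by (simp add: vec_eq_iff Am_v Krow pv_def algebra_simps)

lemma T1: "mom 0 (Suc m) = 1"
proof (induction m)
  case 0
  have "IA *v mom 0 (Suc 0) = IA *v 1" using T_eq[of 0] by (simp add: IA_expand mom_0 IA_one Am_one algebra_simps)
  then show ?case by (rule IA_cancel)
next
  case (Suc m)
  have "IA *v mom 0 (Suc (Suc m)) = IA *v 1" using T_eq[of "Suc m"] by (simp add: IA_expand Suc IA_one Bm_one Am_one algebra_simps)
  then show ?case by (rule IA_cancel)
qed

lemma M1_eq: "mom 1 (Suc m) = Am *v (mom 1 (Suc m) + 1) + Bm *v mom 1 m"
  unfolding vec_eq_iff
proof
  fix r show "mom 1 (Suc m) $ r = (Am *v (mom 1 (Suc m) + 1) + Bm *v mom 1 m) $ r"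
    by (subst mom_split) (simp add: smom1[unfolded One_nat_def] T1)
qed

lemma M2_eq: "mom 2 (Suc m) = Am *v (mom 2 (Suc m) + 2 *\<^sub>R mom 1 (Suc m) + 1) + Bm *v mom 2 m"
  unfolding vec_eq_iff
proof
  fix r show "mom 2 (Suc m) $ r = (Am *v (mom 2 (Suc m) + 2 *\<^sub>R mom 1 (Suc m) + 1) + Bm *v mom 2 m) $ r"
    by (subst mom_split) (simp add: smom2 T1)
qed


lemma IA_qp: "IA *v qp (Suc m) v = Bm *v qp m v"
  by (simp add: matrix_vector_mul_assoc IA_Q)

definition yv where "yv m = xst - qp m xst"

lemma Kx: "K *v xst = Am *v xst + Bm *v xst"
proof -
  have "K *v xst = (Am + Bm) *v xst" by (simp only: AB)
  then show ?thesis by (simp add: matrix_vector_mult_add_rdistrib)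
qed

lemma M1_closed: "mom 1 m = real m *\<^sub>R 1 + yv m"
proof (induction m)
  case 0 then show ?case by (simp add: mom_0 yv_def)
next
  case (Suc m)
  have e: "K *v xst = xst - (1 - 2 *\<^sub>R pv)" unfolding poisson[symmetric] by simp
  have e2: "Am *v xst + Bm *v xst = xst - (1 - 2 *\<^sub>R pv)" using e Kx by simp
  have p: "Am *v xst = xst - (1 - 2 *\<^sub>R pv) - Bm *v xst" using e2 by (simp add: eq_diff_eq)
  have q: "Am *v (Q *v v) = Q *v v - Bm *v v" for v
  proof -
    have "Q *v v - Am *v (Q *v v) = Bm *v v" using IA_qp[of 0 v] by (simp add: IA_expand)
    then have "Q *v v = Bm *v v + Am *v (Q *v v)" by (simp add: diff_eq_eq)
    then have h: "Bm *v v + Am *v (Q *v v) = Q *v v" by (rule sym)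
    have "Am *v (Q *v v) + Bm *v v = Q *v v" by (subst add.commute) (rule h)
    then show ?thesis by (simp only: eq_diff_eq)
  qed
  have "IA *v mom 1 (Suc m) = Am *v 1 + Bm *v mom 1 m" using M1_eq[of m] by (simp add: IA_expand algebra_simps)
  also have "\<dots> = IA *v (real (Suc m) *\<^sub>R 1 + yv (Suc m))"
    unfolding Suc yv_def
    by (simp add: IA_expand Am_one Bm_one matrix_vector_right_distrib matrix_vector_mult_diff_distrib
        matrix_vector_mult_scaleR q p algebra_simps) (simp add: vec_eq_iff)
  finally show ?case by (rule IA_cancel)
qed

end


context mc begin

definition dd where "dd m = mom 2 m - (2 * real m) *\<^sub>R mom 1 m + (real m)^2 *\<^sub>R 1"

lemma M1c: "mom (Suc 0) m = real m *\<^sub>R 1 + yv m" using M1_closed[of m] by simp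

lemma M1_rec: "IA *v mom 1 (Suc m) = Am *v 1 + Bm *v mom 1 m"
  using M1_eq[of m] by (simp add: IA_expand algebra_simps)

lemma M2_rec: "IA *v mom 2 (Suc m) = Am *v (2 *\<^sub>R mom 1 (Suc m) + 1) + Bm *v mom 2 m"
  using M2_eq[of m] by (simp add: IA_expand algebra_simps)

lemma d_rec: "IA *v dd (Suc m) = Bm *v dd m + 1 + 2 *\<^sub>R (Am *v yv (Suc m)) - 2 *\<^sub>R (Bm *v yv m)"
proof -
  have a: "IA *v mom 1 (Suc m) = 1 - pv + real m *\<^sub>R pv + Bm *v yv m"
    using M1_rec[of m] by (simp add: M1_closed[of m] M1c[of m] Am_one Bm_one matrix_vector_right_distrib matrix_vector_mult_scaleR)
  have b: "IA *v mom 2 (Suc m) = (2 * real (Suc m)) *\<^sub>R (1 - pv) + 2 *\<^sub>R (Am *v yv (Suc m)) + (1 - pv) + Bm *v mom 2 m"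
    using M2_rec[of m] by (simp add: M1_closed[of "Suc m"] M1c[of "Suc m"] Am_one matrix_vector_right_distrib matrix_vector_mult_scaleR scaleR_add_right)
  have c: "Bm *v dd m = Bm *v mom 2 m - (2 * real m) *\<^sub>R (real m *\<^sub>R pv + Bm *v yv m) + (real m)^2 *\<^sub>R pv"
    unfolding dd_def by (simp add: M1_closed[of m] M1c[of m] Bm_one matrix_vector_right_distrib matrix_vector_mult_diff_distrib matrix_vector_mult_scaleR)
  have "IA *v dd (Suc m) = IA *v mom 2 (Suc m) - (2 * real (Suc m)) *\<^sub>R (IA *v mom 1 (Suc m)) + (real (Suc m))^2 *\<^sub>R pv"
    unfolding dd_def by (simp add: IA_one matrix_vector_right_distrib matrix_vector_mult_diff_distrib matrix_vector_mult_scaleR)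
  also have "\<dots> = Bm *v dd m + 1 + 2 *\<^sub>R (Am *v yv (Suc m)) - 2 *\<^sub>R (Bm *v yv m)"
    unfolding a b c by (simp add: vec_eq_iff algebra_simps power2_eq_square)
  finally show ?thesis .
qed

definition hh where "hh j = R *v (1 + 2 *\<^sub>R (Am *v yv j) - 2 *\<^sub>R (Bm *v yv (j - 1)))"

primrec Dv where "Dv 0 = 0" | "Dv (Suc m) = Q *v Dv m + hh (Suc m)"

lemma IA_R: "IA *v (R *v v) = v" by (simp add: matrix_vector_mul_assoc R_props)
lemma R_IA: "R *v (IA *v v) = v" by (simp add: matrix_vector_mul_assoc R_props)

lemma IA_Qv: "IA *v (Q *v v) = Bm *v v" by (simp add: matrix_vector_mul_assoc IA_Q)

lemma dd_D: "dd m = Dv m"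
proof (induction m)
  case 0 then show ?case by (simp add: dd_def mom_0)
next
  case (Suc m)
  have "IA *v Dv (Suc m) = IA *v (Q *v Dv m) + IA *v hh (Suc m)" by (simp add: matrix_vector_right_distrib)
  also have "\<dots> = Bm *v dd m + (1 + 2 *\<^sub>R (Am *v yv (Suc m)) - 2 *\<^sub>R (Bm *v yv (Suc m - 1)))"
    by (simp only: IA_Qv hh_def IA_R Suc)
  also have "\<dots> = IA *v dd (Suc m)" unfolding d_rec by (simp add: algebra_simps)
  finally have "IA *v Dv (Suc m) = IA *v dd (Suc m)" .
  then show ?case by (rule IA_cancel[symmetric])
qed

lemma mv_sum: "M *v (\<Sum>i<n. f i) = (\<Sum>i<n. M *v f i)" for M :: "real^'n^'n" and n :: nat and f :: "nat \<Rightarrow> real^'n"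
  by (induction n) (simp_all add: matrix_vector_right_distrib)

lemma Dv_sum: "Dv m = (\<Sum>i<m. qp i (hh (m - i)))"
proof (induction m)
  case 0 then show ?case by simp
next
  case (Suc m)
  show ?case by (simp add: Suc mv_sum sum.lessThan_Suc_shift add.commute del: sum.lessThan_Suc)
qed

lemma R_Am: "R *v (Am *v v) = R *v v - v"
proof -
  have "v = R *v (v - Am *v v)" using R_IA[of v] by (simp add: IA_expand)
  then have "v = R *v v - R *v (Am *v v)" by (simp add: matrix_vector_mult_diff_distrib)
  then show ?thesis by (simp add: algebra_simps)
qed

definition W2 where "W2 = 2 *\<^sub>R mat 1 - R"
definition uu where "uu = R *v (1 + 2 *\<^sub>R (Am *v xst) - 2 *\<^sub>R (Bm *v xst))"

lemma W2_v: "W2 *v v = 2 *\<^sub>R v - R *v v"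
  by (simp add: W2_def matrix_vector_mult_diff_rdistrib scaleR_mv)

lemma hh_eq: assumes "0 < j" shows "hh j = uu + 2 *\<^sub>R (W2 *v qp j xst)"
proof -
  obtain j' where j: "j = Suc j'" using assms by (cases j) auto
  have RB: "R *v (Bm *v v) = Q *v v" for v by (simp add: Q_def matrix_vector_mul_assoc)
  show ?thesis unfolding hh_def uu_def yv_def j W2_v
    by (simp add: matrix_vector_right_distrib matrix_vector_mult_diff_distrib matrix_vector_mult_scaleR
        R_Am RB algebra_simps)
qed

end


context mc begin

lemma piR: "piv \<bullet> (R *v g) = 2 * (\<mu> \<bullet> g)"
proof -
  have "(\<mu> v* Bm) v* R = \<mu>" by (simp add: muB vector_matrix_mul_assoc R_props)
  then have "piv v* R = 2 *\<^sub>R \<mu>" unfolding piv_def by (simp add: scaleR_vector_matrix_assoc)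
  then show ?thesis by (simp add: dot_lmul_matrix[symmetric])
qed

lemma pi_one: "piv \<bullet> 1 = 1" using pi_sum by (simp add: inner_vec_def)

lemma piW2: "piv \<bullet> (W2 *v 1) = 0"
  by (simp add: W2_v inner_diff_right piR pi_one mu_one)

lemma nu_val: "piv \<bullet> uu = nu_tilde K p \<mu>"
  unfolding uu_def nu_eq by (simp add: piR inner_add_right inner_diff_right mu_one c_xs)

lemma qp_add: "qp i (a + b) = qp i a + qp i b"
  by (induction i) (simp_all add: matrix_vector_right_distrib)
lemma qp_scale: "qp i (c *\<^sub>R a) = c *\<^sub>R qp i a"
  by (induction i) (simp_all add: matrix_vector_mult_scaleR)
lemma qp_diff: "qp i (a - b) = qp i a - qp i b"
  by (induction i) (simp_all add: matrix_vector_mult_diff_distrib)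

definition ob :: "real^'n \<Rightarrow> real" where "ob f = 2 * (\<Sum>s\<in>UNIV. \<bar>f$s\<bar>)"
lemma ob_abs: "\<bar>f$r\<bar> \<le> (\<Sum>s\<in>UNIV. \<bar>f$s\<bar>)" for f :: "real^'n"
  by (rule member_le_sum[of r UNIV "\<lambda>s. \<bar>f$s\<bar>"]) auto
lemma ob: "\<forall>r r'. \<bar>f$r - f$r'\<bar> \<le> ob f" for f :: "real^'n"
proof (intro allI)
  fix r r'
  have "\<bar>f$r - f$r'\<bar> \<le> \<bar>f$r\<bar> + \<bar>f$r'\<bar>" by (rule abs_triangle_ineq4)
  then show "\<bar>f$r - f$r'\<bar> \<le> ob f" unfolding ob_def using ob_abs[of f r] ob_abs[of f r'] by simp
qed

lemma term_bound: assumes w: "prob w" and j: "0 < j"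
  shows "\<bar>w \<bullet> qp i (hh j) - piv \<bullet> uu\<bar> \<le> (1 - dl)^i * (ob uu + 2 * \<bar>piv \<bullet> xst\<bar> * ob (W2 *v 1)) + 2 * mnorm W2 * ((1-dl)^j * ob xst)"
proof -
  define px where "px = piv \<bullet> xst"
  define e where "e = qp j xst - px *\<^sub>R 1"
  have he: "hh j = uu + 2 *\<^sub>R (W2 *v e) + (2 * px) *\<^sub>R (W2 *v 1)"
    unfolding hh_eq[OF j] e_def by (simp add: matrix_vector_mult_diff_distrib matrix_vector_mult_scaleR algebra_simps)
  have "w \<bullet> qp i (hh j) = w \<bullet> qp i uu + 2 * (w \<bullet> qp i (W2 *v e)) + 2 * px * (w \<bullet> qp i (W2 *v 1))"
    unfolding he by (simp add: qp_add qp_scale inner_add_right)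
  moreover have "\<bar>w \<bullet> qp i uu - piv \<bullet> uu\<bar> \<le> (1 - dl)^i * ob uu" by (rule conv_pi[OF w ob])
  moreover have "\<bar>w \<bullet> qp i (W2 *v 1) - 0\<bar> \<le> (1 - dl)^i * ob (W2 *v 1)" using conv_pi[OF w ob, of i "W2 *v 1"] piW2 by simp
  moreover have "\<bar>w \<bullet> qp i (W2 *v e)\<bar> \<le> mnorm W2 * ((1-dl)^j * ob xst)"
  proof -
    have "\<bar>e$s\<bar> \<le> (1-dl)^j * ob xst" for s
      using conv_pi[OF prob_ev ob, of s j xst] unfolding e_def px_def by (simp add: ev_dot)
    then have "\<forall>s. \<bar>(W2 *v e)$s\<bar> \<le> mnorm W2 * ((1-dl)^j * ob xst)" by (intro allI mnorm_bound) auto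
    then have "\<forall>s. \<bar>qp i (W2 *v e) $ s\<bar> \<le> mnorm W2 * ((1-dl)^j * ob xst)" by (intro allI qp_bound) auto
    then show ?thesis by (rule prob_abs[OF w])
  qed
  ultimately have
    eq: "w \<bullet> qp i (hh j) = w \<bullet> qp i uu + 2 * (w \<bullet> qp i (W2 *v e)) + 2 * px * (w \<bullet> qp i (W2 *v 1))"
    and a: "\<bar>w \<bullet> qp i uu - piv \<bullet> uu\<bar> \<le> (1 - dl)^i * ob uu"
    and c: "\<bar>w \<bullet> qp i (W2 *v 1)\<bar> \<le> (1 - dl)^i * ob (W2 *v 1)"
    and b: "\<bar>w \<bullet> qp i (W2 *v e)\<bar> \<le> mnorm W2 * ((1-dl)^j * ob xst)" by auto
  have c2: "\<bar>2 * px * (w \<bullet> qp i (W2 *v 1))\<bar> \<le> 2 * \<bar>px\<bar> * ((1 - dl)^i * ob (W2 *v 1))"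
    using c by (simp add: abs_mult mult_left_mono)
  have dist: "(1 - dl)^i * (ob uu + 2 * \<bar>px\<bar> * ob (W2 *v 1)) = (1 - dl)^i * ob uu + 2 * \<bar>px\<bar> * ((1 - dl)^i * ob (W2 *v 1))"
    by (simp add: algebra_simps)
  show ?thesis unfolding px_def[symmetric] eq dist using a b c2 by arith
qed

end


context mc begin

lemma geo1: assumes "0 \<le> x" "x < (1::real)" shows "(\<Sum>i<m. x^i) \<le> 1 / (1 - x)"
proof -
  have "(\<Sum>i<m. x^i) = (1 - x^m) / (1 - x)" using assms by (simp add: sum_gp_strict)
  also have "\<dots> \<le> 1 / (1 - x)" using assms by (intro divide_right_mono) auto
  finally show ?thesis .
qed

lemma geo2: assumes "0 \<le> x" "x \<le> (1::real)" shows "(\<Sum>i<m. x^(m - i)) \<le> (\<Sum>i<m. x^i)"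
proof -
  have "(\<Sum>i<m. x^(m - i)) \<le> (\<Sum>i<m. x^(m - Suc i))"
    using assms by (intro sum_mono power_decreasing) auto
  also have "\<dots> = (\<Sum>i<m. x^i)" by (rule sum.nat_diff_reindex)
  finally show ?thesis .
qed

lemma ob_nn: "0 \<le> ob f" unfolding ob_def by (simp add: sum_nonneg)
lemma mnorm_nn: "0 \<le> mnorm M" unfolding mnorm_def by (simp add: sum_nonneg)

lemma main_est: "\<exists>C. \<forall>w m. prob w \<longrightarrow> \<bar>w \<bullet> Dv m - real m * (piv \<bullet> uu)\<bar> \<le> C"
proof -
  define l where "l = 1 - dl"
  have l0: "0 \<le> l" and l1: "l < 1" using dl_pos dl_le1 unfolding l_def by auto
  define A where "A = ob uu + 2 * \<bar>piv \<bullet> xst\<bar> * ob (W2 *v 1)"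
  define B where "B = 2 * mnorm W2 * ob xst"
  have A0: "0 \<le> A" unfolding A_def by (simp add: ob_nn)
  have B0: "0 \<le> B" unfolding B_def by (simp add: ob_nn mnorm_nn)
  have "\<bar>w \<bullet> Dv m - real m * (piv \<bullet> uu)\<bar> \<le> (A + B) / (1 - l)" if w: "prob w" for w m
  proof -
    have "w \<bullet> Dv m - real m * (piv \<bullet> uu) = (\<Sum>i<m. w \<bullet> qp i (hh (m - i)) - piv \<bullet> uu)"
      by (simp add: Dv_sum inner_sum_right sum_subtractf)
    also have "\<bar>\<dots>\<bar> \<le> (\<Sum>i<m. \<bar>w \<bullet> qp i (hh (m - i)) - piv \<bullet> uu\<bar>)" by (rule sum_abs)
    also have "\<dots> \<le> (\<Sum>i<m. l^i * A + B * l^(m - i))"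
    proof (rule sum_mono)
      fix i assume "i \<in> {..<m}"
      then have "0 < m - i" by simp
      from term_bound[OF w this, of i]
      show "\<bar>w \<bullet> qp i (hh (m - i)) - piv \<bullet> uu\<bar> \<le> l^i * A + B * l^(m - i)"
        unfolding l_def[symmetric] A_def B_def by (simp add: algebra_simps)
    qed
    also have "\<dots> = (\<Sum>i<m. l^i) * A + B * (\<Sum>i<m. l^(m - i))"
      by (simp add: sum.distrib sum_distrib_left sum_distrib_right)
    also have "\<dots> \<le> (1 / (1 - l)) * A + B * (1 / (1 - l))"
    proof -
      have "(\<Sum>i<m. l^i) \<le> 1 / (1 - l)" by (rule geo1[OF l0 l1])
      moreover have "(\<Sum>i<m. l^(m - i)) \<le> 1 / (1 - l)" using geo2[OF l0] geo1[OF l0 l1] l1 by (meson less_imp_le order_trans)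
      ultimately show ?thesis using A0 B0 by (intro add_mono mult_right_mono mult_left_mono) auto
    qed
    also have "\<dots> = (A + B) / (1 - l)" by (simp add: add_divide_distrib)
    finally show ?thesis .
  qed
  then show ?thesis by blast
qed

end


context mc begin

lemma F_sums: fixes \<eta> :: "'n \<Rightarrow> real"
  shows "(\<lambda>k. real k ^ j * F_prob \<eta> K p (Suc m) k) sums ((\<chi> r. \<eta> r) \<bullet> mom j (Suc m))"
proof -
  have "(\<lambda>k. \<eta> r * (real k ^ j * W (Suc m) k $ r)) sums (\<eta> r * mom j (Suc m) $ r)" for r
    unfolding mom_def using sums_mult[OF summable_sums[OF W_summable0[of j "Suc m" r]], of "\<eta> r"] by simp
  then have "(\<lambda>k. \<Sum>r\<in>UNIV. \<eta> r * (real k ^ j * W (Suc m) k $ r)) sums (\<Sum>r\<in>UNIV. \<eta> r * mom j (Suc m) $ r)"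
    by (rule sums_sum)
  moreover have "(\<Sum>r\<in>UNIV. \<eta> r * (real k ^ j * W (Suc m) k $ r)) = real k ^ j * F_prob \<eta> K p (Suc m) k" for k
    by (simp add: F_prob_W sum_distrib_left mult.left_commute)
  moreover have "(\<Sum>r\<in>UNIV. \<eta> r * mom j (Suc m) $ r) = (\<chi> r. \<eta> r) \<bullet> mom j (Suc m)"
    by (simp add: inner_vec_def)
  ultimately show ?thesis by simp
qed

lemma prob_eta: "is_distribution \<eta> \<Longrightarrow> prob (\<chi> r. \<eta> r)"
  unfolding is_distribution_def prob_def by simp

lemma F_var_eq: assumes "is_distribution \<eta>"
  shows "F_var \<eta> K p (Suc m) = (\<chi> r. \<eta> r) \<bullet> Dv (Suc m) - ((\<chi> r. \<eta> r) \<bullet> yv (Suc m))^2"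
proof -
  define ev' where "ev' = (\<chi> r. \<eta> r)"
  define F where "F k = F_prob \<eta> K p (Suc m) k" for k
  define M where "M = ev' \<bullet> mom 1 (Suc m)"
  have s0: "F sums 1"
  proof -
    have "(\<lambda>k. real k ^ 0 * F k) sums (ev' \<bullet> mom 0 (Suc m))" unfolding F_def ev'_def by (rule F_sums)
    moreover have "ev' \<bullet> mom 0 (Suc m) = 1" using prob_eta[OF assms] unfolding T1 ev'_def prob_def
      by (simp add: inner_vec_def)
    ultimately show ?thesis by simp
  qed
  have s1: "(\<lambda>k. real k * F k) sums M" using F_sums[of 1 \<eta> m] unfolding F_def M_def ev'_def by simp
  have s2: "(\<lambda>k. real k ^ 2 * F k) sums (ev' \<bullet> mom 2 (Suc m))" unfolding F_def ev'_def by (rule F_sums)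
  have mean: "F_mean \<eta> K p (Suc m) = M" unfolding F_mean_def F_def[symmetric] using s1 by (simp add: sums_iff)
  have "(\<lambda>k. real k ^ 2 * F k - 2 * M * (real k * F k) + M^2 * F k) sums (ev' \<bullet> mom 2 (Suc m) - 2 * M * M + M^2 * 1)"
    by (intro sums_add sums_diff sums_mult s0 s1 s2)
  moreover have "(\<lambda>k. real k ^ 2 * F k - 2 * M * (real k * F k) + M^2 * F k) = (\<lambda>k. (real k - M)^2 * F k)"
    by (simp add: fun_eq_iff power2_eq_square algebra_simps)
  ultimately have "(\<lambda>k. (real k - M)^2 * F k) sums (ev' \<bullet> mom 2 (Suc m) - M^2)" by (simp add: power2_eq_square)
  then have var: "F_var \<eta> K p (Suc m) = ev' \<bullet> mom 2 (Suc m) - M^2"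
    unfolding F_var_def mean F_def[symmetric] by (simp add: sums_iff)
  have one: "ev' \<bullet> 1 = 1" using prob_eta[OF assms] unfolding ev'_def prob_def by (simp add: inner_vec_def)
  have Mv: "M = real (Suc m) + ev' \<bullet> yv (Suc m)"
    unfolding M_def M1_closed by (simp add: inner_add_right one)
  have "ev' \<bullet> dd (Suc m) = ev' \<bullet> mom 2 (Suc m) - 2 * real (Suc m) * M + (real (Suc m))^2"
    unfolding dd_def M_def by (simp add: inner_add_right inner_diff_right one)
  then have "ev' \<bullet> Dv (Suc m) - (ev' \<bullet> yv (Suc m))^2 = ev' \<bullet> mom 2 (Suc m) - M^2"
    unfolding dd_D Mv by (simp add: power2_eq_square algebra_simps)
  then show ?thesis using var unfolding ev'_def by simp
qed

lemma yv_bound: "\<bar>(yv m)$s\<bar> \<le> ob xst"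
proof -
  have a: "\<bar>xst$s\<bar> \<le> (\<Sum>s\<in>UNIV. \<bar>xst$s\<bar>)" by (rule ob_abs)
  have b: "\<bar>qp m xst $ s\<bar> \<le> (\<Sum>s\<in>UNIV. \<bar>xst$s\<bar>)" by (rule qp_bound) (simp add: ob_abs)
  have "\<bar>(yv m)$s\<bar> \<le> \<bar>xst$s\<bar> + \<bar>qp m xst $ s\<bar>" unfolding yv_def by (simp add: abs_triangle_ineq4)
  then show ?thesis using a b unfolding ob_def by simp
qed

theorem final_mc: "\<exists>C>0. \<forall>\<eta>. is_distribution \<eta> \<longrightarrow> (\<forall>n::nat. n \<ge> 1 \<longrightarrow>
           \<bar>F_var \<eta> K p (n+1) / real n - nu_tilde K p \<mu>\<bar> \<le> C / real n)"
proof -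
  obtain C1 where C1: "\<And>w m. prob w \<Longrightarrow> \<bar>w \<bullet> Dv m - real m * (piv \<bullet> uu)\<bar> \<le> C1" using main_est by blast
  define C where "C = C1 + (ob xst)^2 + \<bar>nu_tilde K p \<mu>\<bar> + 1"
  have C1nn: "0 \<le> C1" using C1[OF prob_ev, of undefined 0] by simp
  have Cpos: "0 < C" unfolding C_def using C1nn by (simp add: add_nonneg_pos)
  have "\<bar>F_var \<eta> K p (n+1) / real n - nu_tilde K p \<mu>\<bar> \<le> C / real n"
    if eta: "is_distribution \<eta>" and n: "n \<ge> 1" for \<eta> n
  proof -
    define w where "w = (\<chi> r. \<eta> r)"
    define nu where "nu = nu_tilde K p \<mu>"
    have pw: "prob w" unfolding w_def by (rule prob_eta[OF eta])
    have V: "F_var \<eta> K p (n+1) = w \<bullet> Dv (Suc n) - (w \<bullet> yv (Suc n))^2"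
      using F_var_eq[OF eta, of n] unfolding w_def by simp
    have a: "\<bar>w \<bullet> Dv (Suc n) - real (Suc n) * nu\<bar> \<le> C1" using C1[OF pw, of "Suc n"] nu_val unfolding nu_def by simp
    have yb: "\<bar>w \<bullet> yv (Suc n)\<bar> \<le> ob xst" by (rule prob_abs[OF pw]) (simp add: yv_bound)
    then have b: "(w \<bullet> yv (Suc n))^2 \<le> (ob xst)^2"
      by (metis abs_ge_zero power2_abs power_mono)
    have b0: "0 \<le> (w \<bullet> yv (Suc n))^2" by simp
    have "\<bar>F_var \<eta> K p (n+1) - real n * nu\<bar> \<le> C1 + (ob xst)^2 + \<bar>nu\<bar>"
    proof -
      have e: "real (Suc n) * nu = real n * nu + nu" by (simp add: algebra_simps)
      show ?thesis unfolding V using a b b0 e by arith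
    qed
    then have "\<bar>F_var \<eta> K p (n+1) - real n * nu\<bar> \<le> C" unfolding C_def nu_def by simp
    moreover have "F_var \<eta> K p (n+1) / real n - nu = (F_var \<eta> K p (n+1) - real n * nu) / real n"
      using n by (simp add: field_simps)
    ultimately show ?thesis using n unfolding nu_def[symmetric]
      by (simp add: abs_divide divide_right_mono)
  qed
  then show ?thesis using Cpos by blast
qed

end



theorem proposition4p2:
  fixes K :: "real^'n^'n" and p :: "'n \<Rightarrow> real" and \<mu> :: "real^'n"
  assumes "stochastic_matrix K"
    and "unique_closed_irreducible K"
    and "stationary K \<mu>"
    and "\<forall>i. 0 < p i \<and> p i < 1"
    and "(\<Sum>i\<in>UNIV. \<mu>$i * p i) = 1/2"
  shows "\<exists>C>0. \<forall>\<eta>. is_distribution \<eta> \<longrightarrow> (\<forall>n::nat. n \<ge> 1 \<longrightarrow>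
           \<bar>F_var \<eta> K p (n+1) / real n - nu_tilde K p \<mu>\<bar> \<le> C / real n)"
proof -
  interpret mc K p \<mu> using assms by unfold_locales
  show ?thesis by (rule final_mc)
qed

end
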